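(* In the aggregative setting described in the context (all listed assumptions hold), run the distributed VS-PGR algorithm with step size $\alpha>0$, $\tau_k=k+1$ and $S_k=\lceil\alpha^{-2}\rho^{-(k+1)}\rceil$ for some $\rho\in(0,1)$. Set $\gamma\triangleq\max\{\rho,\beta\}$, $\tilde L_\phi\triangleq\sqrt{1/2+(1+2\alpha^2)\bar\nu_1^2+2L_\phi^2}$, $\varrho_\phi\triangleq1-2\alpha\eta_\phi+2\alpha^2\tilde L_\phi^2$, $\bar\nu^2\triangleq(1+2\alpha^2)(2\bar\nu_1^2\|x^*\|^2+\bar\nu_2^2)$ with $\bar\nu_1\triangleq\max_i\nu_{i,1}$ and $\bar\nu_2^2\triangleq\sum_i\nu_{i,2}^2$, $D_{\mathcal{R}}\triangleq\sum_{j=1}^n\max_{x_j\in\mathcal{R}_j}\|x_j\|$, $C_1\triangleq\theta D_{\mathcal{R}}$, $C_2\triangleq2\theta D_{\mathcal{R}}\Big(e\sqrt{1/\ln(\beta^{-1/2})}+\frac{2+\ln(1/\beta)}{\beta^{1/2}\ln(1/\beta)}\Big)$. Then for every $k\ge0$, $$\mathbb{E}[\|x_{k+1}-x^*\|^2]\le\varrho_\phi\,\mathbb{E}[\|x_k-x^*\|^2]+C_3\gamma^{k+1},$$ where $C_3\triangleq\alpha^2\bar\nu^2+4\alpha nD_{\mathcal{R}}(C_1+C_2)\sum_{i=1}^nL_i+4\alpha^2n^2\beta(C_1^2+C_2^2)\sum_{i=1}^nL_i^2$.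
   Context: Aggregative game: $n$ players, each chooses $x_i\in\mathbb{R}^d$ (common $d$); $x=(x_1,\dots,x_n)$, $\bar x=\sum_jx_j$, $\bar x_{-i}=\sum_{j\ne i}x_j$. Player $i$ solves $\min_{x_i}f_i(x_i,\bar x)+r_i(x_i)$, where $f_i(x_i,\bar x)=\mathbb{E}[\psi_i(x_i,x_i+\bar x_{-i};\xi_i)]$, $\xi_i$ a random vector in $\mathbb{R}^{m_i}$. Assumptions: (a) each $r_i$ is lower semicontinuous and convex with compact effective domain $\mathcal{R}_i$; (b) for any $x_{-i}\in\prod_{j\ne i}\mathcal{R}_j$, $x_i\mapsto f_i(x_i,x_i+\bar x_{-i})$ is continuously differentiable and convex on $\mathcal{R}_i$; (c) for any such $x_{-i}$ and any $\xi_i$, $\psi_i(x_i,x_i+\bar x_{-i};\xi_i)$ is differentiable in $x_i\in\mathcal{R}_i$. Let $\mathcal{R}=\prod_i\mathcal{R}_i$. For $x\in\mathcal{R}$ let $\phi_i(x)$ be the gradient at $x_i$ of $x_i\mapsto f_i(x_i,x_i+\bar x_{-i})$ and $\phi(x)=(\phi_i(x))_i$. Each player has a map $F_i:\mathcal{R}_i\times\mathbb{R}^d\to\mathbb{R}^d$ with $F_i(x_i,\sum_jx_j)=\phi_i(x)$ for all $x\in\mathcal{R}$; $\nabla_{x_i}\psi_i(x_i,z;\xi_i)$ denotes the sampled gradient estimating $F_i(x_i,z)$. $x^*$ denotes the Nash equilibrium (each $x_i^*$ minimizes player $i$'s objective given $x_{-i}^*$). $\mathrm{prox}_{\alpha r_i}(z)=\arg\min_y(r_i(y)+\frac1{2\alpha}\|y-z\|^2)$.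 Network: undirected graph on $\{1,\dots,n\}$ with neighbour sets $\mathcal{N}_i\ni i$, matrix $A=[a_{ij}]$ with $a_{ij}>0$ if $j\in\mathcal{N}_i$ and $a_{ij}=0$ otherwise. The graph is connected and $A$ is symmetric with row sums one. Then there exist $\theta>0$, $\beta\in(0,1)$ with $|[A^k]_{ij}-1/n|\le\theta\beta^k$ for all $i,j$ and $k\ge1$; fix such $\theta,\beta$. Distributed VS-PGR algorithm: deterministic positive integers $\tau_k,S_k$; $v_{i,0}=x_{i,0}\in\mathcal{R}_i$. At iteration $k$: set $\hat v_{i,k}:=v_{i,k}$ and repeat $\tau_k$ times $\hat v_{i,k}:=\sum_{j\in\mathcal{N}_i}a_{ij}\hat v_{j,k}$ for all $i$; then $x_{i,k+1}=\mathrm{prox}_{\alpha r_i}\big[x_{i,k}-\frac{\alpha}{S_k}\sum_{p=1}^{S_k}\nabla_{x_i}\psi_i(x_{i,k},n\hat v_{i,k};\xi_{i,k}^p)\big]$ with i.i.d. realizations $\xi_{i,k}^p$ of $\xi_i$, and $v_{i,k+1}=\hat v_{i,k}+x_{i,k+1}-x_{i,k}$. Let $e_{i,k}=\frac1{S_k}\sum_p\nabla_{x_i}\psi_i(x_{i,k},n\hat v_{i,k};\xi_{i,k}^p)-F_i(x_{i,k},n\hat v_{i,k})$ and $\mathcal{F}_k=\sigma\{x_0,\dots,x_k\}$. Further assumptions: (ii) $(\phi(x)-\phi(y))^T(x-y)\ge\eta_\phi\|x-y\|^2$ for $x,y\in\mathcal{R}$; (iii) $\|\phi(x)-\phi(y)\|\le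 L_\phi\|x-y\|$ on $\mathcal{R}$; (iv) for each $i$ and $x_i\in\mathcal{R}_i$, $F_i(x_i,\cdot)$ is Lipschitz on bounded sets: for every $c_z>0$ there is $L_i$ (possibly depending on $c_z$) with $\|F_i(x_i,z_1)-F_i(x_i,z_2)\|\le L_i\|z_1-z_2\|$ whenever $\|z_1\|,\|z_2\|\le c_z$; here $L_i$ is such a constant for a bound $c_z$ covering the vectors $n\hat v_{i,k}$ and $\sum_jx_{j,k}$ generated by the algorithm; (v) there are $\nu_{i,1},\nu_{i,2}>0$ with $\mathbb{E}[\|e_{i,k}\|^2\mid\mathcal{F}_k]\le(\nu_{i,1}^2\|x_{i,k}\|^2+\nu_{i,2}^2)/S_k$ a.s. for all $k$. *)

theory Defs
  imports "HOL-Analysis.Analysis" "HOL-Probability.Probability"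
begin

definition lsc_fun :: "('a::topological_space \<Rightarrow> ereal) \<Rightarrow> bool" where
  "lsc_fun f \<longleftrightarrow> (\<forall>c. closed {x. f x \<le> c})"

definition econvex :: "('a::real_vector \<Rightarrow> ereal) \<Rightarrow> bool" where
  "econvex f \<longleftrightarrow> (\<forall>x y t. 0 < t \<and> t < 1 \<longrightarrow>
      f ((1 - t) *\<^sub>R x + t *\<^sub>R y) \<le> ereal (1 - t) * f x + ereal t * f y)"

definition edom :: "('a \<Rightarrow> ereal) \<Rightarrow> 'a set" where
  "edom f = {x. f x < \<infinity>}"

definition prox :: "real \<Rightarrow> ('a::real_normed_vector \<Rightarrow> ereal) \<Rightarrow> 'a \<Rightarrow> 'a" where
  "prox \<alpha> f z = (SOME y. \<forall>w. f y + ereal (norm (y - z)^2 / (2 * \<alpha>))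
                                 \<le> f w + ereal (norm (w - z)^2 / (2 * \<alpha>)))"

fun matpow :: "('n::finite \<Rightarrow> 'n \<Rightarrow> real) \<Rightarrow> nat \<Rightarrow> 'n \<Rightarrow> 'n \<Rightarrow> real" where
  "matpow A 0 = (\<lambda>i j. if i = j then 1 else 0)"
| "matpow A (Suc k) = (\<lambda>i j. \<Sum>l\<in>UNIV. matpow A k i l * A l j)"

text \<open>One consensus step: vhat_i := sum_{j in N_i} a_ij vhat_j (a_ij = 0 off the neighbour set).\<close>
definition mix :: "('n::finite \<Rightarrow> 'n \<Rightarrow> real) \<Rightarrow> ('n \<Rightarrow> 'a::real_vector) \<Rightarrow> 'n \<Rightarrow> 'a" where
  "mix A v = (\<lambda>i. \<Sum>j\<in>UNIV. A i j *\<^sub>R v j)"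

definition sq_dist :: "('n::finite \<Rightarrow> 'a::real_normed_vector) \<Rightarrow> ('n \<Rightarrow> 'a) \<Rightarrow> real" where
  "sq_dist x y = (\<Sum>i\<in>UNIV. norm (x i - y i)^2)"

definition sq_norm :: "('n::finite \<Rightarrow> 'a::real_normed_vector) \<Rightarrow> real" where
  "sq_norm x = (\<Sum>i\<in>UNIV. norm (x i)^2)"

definition others :: "('n::finite \<Rightarrow> 'a::real_vector) \<Rightarrow> 'n \<Rightarrow> 'a" where
  "others x i = (\<Sum>j\<in>UNIV - {i}. x j)"

text \<open>State (x_k, v_k) as a function of the sample path omega.
  Parameters: step alpha, mixing matrix A, regularizers r, sampled gradient G,
  batch sizes S, consensus rounds tau, samples xi i k p omega, initial point x0.\<close>
fun vspgr :: "real \<Rightarrow> ('n::finite \<Rightarrow> 'n \<Rightarrow> real) \<Rightarrow> ('n \<Rightarrow> 'a::euclidean_space \<Rightarrow> ereal)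
    \<Rightarrow> ('n \<Rightarrow> 'a \<Rightarrow> 'a \<Rightarrow> 'b \<Rightarrow> 'a) \<Rightarrow> (nat \<Rightarrow> nat) \<Rightarrow> (nat \<Rightarrow> nat)
    \<Rightarrow> ('n \<Rightarrow> nat \<Rightarrow> nat \<Rightarrow> 'w \<Rightarrow> 'b) \<Rightarrow> ('n \<Rightarrow> 'a) \<Rightarrow> nat \<Rightarrow> 'w \<Rightarrow> ('n \<Rightarrow> 'a) \<times> ('n \<Rightarrow> 'a)"
where
  "vspgr \<alpha> A r G S \<tau> \<xi> x0 0 \<omega> = (x0, x0)"
| "vspgr \<alpha> A r G S \<tau> \<xi> x0 (Suc k) \<omega> =
     (let x = fst (vspgr \<alpha> A r G S \<tau> \<xi> x0 k \<omega>);
          v = snd (vspgr \<alpha> A r G S \<tau> \<xi> x0 k \<omega>);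
          vh = (mix A ^^ \<tau> k) v;
          xn = (\<lambda>i. prox \<alpha> (r i) (x i - (\<alpha> / real (S k)) *\<^sub>R
                   (\<Sum>p\<in>{1..S k}. G i (x i) (real CARD('n) *\<^sub>R vh i) (\<xi> i k p \<omega>))))
      in (xn, \<lambda>i. vh i + xn i - x i))"

definition vs_x where
  "vs_x \<alpha> A r G S \<tau> \<xi> x0 k \<omega> = fst (vspgr \<alpha> A r G S \<tau> \<xi> x0 k \<omega>)"

definition vs_vhat where
  "vs_vhat \<alpha> A r G S \<tau> \<xi> x0 k \<omega> = (mix A ^^ \<tau> k) (snd (vspgr \<alpha> A r G S \<tau> \<xi> x0 k \<omega>))"

definition vs_err :: "real \<Rightarrow> ('n::finite \<Rightarrow> 'n \<Rightarrow> real) \<Rightarrow> ('n \<Rightarrow> 'a::euclidean_space \<Rightarrow> ereal)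
    \<Rightarrow> ('n \<Rightarrow> 'a \<Rightarrow> 'a \<Rightarrow> 'b \<Rightarrow> 'a) \<Rightarrow> ('n \<Rightarrow> 'a \<Rightarrow> 'a \<Rightarrow> 'a) \<Rightarrow> (nat \<Rightarrow> nat) \<Rightarrow> (nat \<Rightarrow> nat)
    \<Rightarrow> ('n \<Rightarrow> nat \<Rightarrow> nat \<Rightarrow> 'w \<Rightarrow> 'b) \<Rightarrow> ('n \<Rightarrow> 'a) \<Rightarrow> nat \<Rightarrow> 'n \<Rightarrow> 'w \<Rightarrow> 'a" where
  "vs_err \<alpha> A r G F S \<tau> \<xi> x0 k i \<omega> =
     (let x = vs_x \<alpha> A r G S \<tau> \<xi> x0 k \<omega>; vh = vs_vhat \<alpha> A r G S \<tau> \<xi> x0 k \<omega>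
      in (1 / real (S k)) *\<^sub>R (\<Sum>p\<in>{1..S k}. G i (x i) (real CARD('n) *\<^sub>R vh i) (\<xi> i k p \<omega>))
         - F i (x i) (real CARD('n) *\<^sub>R vh i))"

text \<open>Natural filtration F_k = sigma{x_0, ..., x_k} (on the sample space of M).\<close>
definition nat_filt :: "'w measure \<Rightarrow> (nat \<Rightarrow> 'w \<Rightarrow> 'n \<Rightarrow> 'a::topological_space) \<Rightarrow> nat \<Rightarrow> 'w measure" where
  "nat_filt M X k = sigma (space M)
     (\<Union>j\<in>{..k}. \<Union>i. {(\<lambda>\<omega>. X j \<omega> i) -` B \<inter> space M | B. B \<in> sets borel})"

end

theory Submission
  imports Defs
begin

lemma closed_sublevel_plus:
  fixes r :: "'a::euclidean_space \<Rightarrow> ereal" and q :: "'a \<Rightarrow> real"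
  assumes lsc: "lsc_fun r" and qc: "continuous_on UNIV q"
  shows "closed {y. r y + ereal (q y) \<le> ereal c}"
  unfolding closed_sequential_limits
proof (intro allI impI, elim conjE)
  fix Y l assume Y: "\<forall>n. Y n \<in> {y. r y + ereal (q y) \<le> ereal c}" and lim: "Y \<longlonglongrightarrow> l"
  have ql: "(\<lambda>n. q (Y n)) \<longlonglongrightarrow> q l"
    using qc lim by (simp add: continuous_on_eq_continuous_at isCont_tendsto_compose)
  show "l \<in> {y. r y + ereal (q y) \<le> ereal c}"
  proof (simp, rule ereal_le_epsilon2)
    fix e :: real assume e: "0 < e"
    from ql e obtain N where N: "\<forall>n\<ge>N. dist (q (Y n)) (q l) < e"
      unfolding lim_sequentially by blast
    have cl: "closed {y. r y \<le> ereal (c - q l + e)}" using lsc unfolding lsc_fun_def by blast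
    have inS: "\<forall>n. Y (n + N) \<in> {y. r y \<le> ereal (c - q l + e)}"
    proof
      fix n
      have d: "q (Y (n+N)) > q l - e" using N[rule_format, of "n+N"] by (auto simp: dist_real_def)
      have s: "r (Y (n+N)) + ereal (q (Y (n+N))) \<le> ereal c" using Y by auto
      have "r (Y (n+N)) \<le> ereal (c - q (Y (n+N)))"
        using s by (cases "r (Y (n+N))") auto
      also have "\<dots> \<le> ereal (c - q l + e)" using d by simp
      finally show "Y (n + N) \<in> {y. r y \<le> ereal (c - q l + e)}" by simp
    qed
    have "(\<lambda>n. Y (n + N)) \<longlonglongrightarrow> l" using lim by (rule LIMSEQ_ignore_initial_segment)
    then have "l \<in> {y. r y \<le> ereal (c - q l + e)}"
      using cl[unfolded closed_sequential_limits] inS by auto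
    then have "r l \<le> ereal (c - q l + e)" by simp
    then show "r l + ereal (q l) \<le> ereal c + ereal e"
      by (cases "r l") auto
  qed
qed

lemma edom_finite:
  assumes "\<forall>x. r x \<noteq> -\<infinity>" "w \<in> edom r"
  shows "r w = ereal (real_of_ereal (r w))"
  using assms unfolding edom_def by (cases "r w") auto

lemma prox_spec:
  fixes r :: "'a::euclidean_space \<Rightarrow> ereal"
  assumes proper: "\<forall>x. r x \<noteq> -\<infinity>" and lsc: "lsc_fun r" and cpt: "compact (edom r)"
    and ne: "edom r \<noteq> {}"
  shows "\<forall>w. r (prox \<alpha> r z) + ereal (norm (prox \<alpha> r z - z)^2/(2*\<alpha>))
            \<le> r w + ereal (norm (w - z)^2/(2*\<alpha>))"
proof -
  define h where "h y = r y + ereal (norm (y - z)^2/(2*\<alpha>))" for y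
  define T where "T w = {y. h y \<le> h w}" for w
  have closedT: "closed (T w)" if "w \<in> edom r" for w
  proof -
    have "h w = ereal (real_of_ereal (r w) + norm (w - z)^2/(2*\<alpha>))"
      unfolding h_def by (subst edom_finite[OF proper that]) simp
    then have "T w = {y. r y + ereal (norm (y - z)^2/(2*\<alpha>)) \<le> ereal (real_of_ereal (r w) + norm (w - z)^2/(2*\<alpha>))}"
      unfolding T_def h_def by simp
    moreover have "continuous_on UNIV (\<lambda>y. norm (y - z)^2/(2*\<alpha>))"
      unfolding divide_inverse by (rule continuous_on_mult_right) (intro continuous_intros)
    ultimately show ?thesis using closed_sublevel_plus[OF lsc] by simp
  qed
  have "edom r \<inter> (\<Inter>w\<in>edom r. T w) \<noteq> {}"
  proof (rule compact_imp_fip_image[OF cpt])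
    fix i assume "i \<in> edom r" then show "closed (T i)" by (rule closedT)
  next
    fix I' assume fI: "finite I'" and sub: "I' \<subseteq> edom r"
    show "edom r \<inter> (\<Inter>i\<in>I'. T i) \<noteq> {}"
    proof (cases "I' = {}")
      case True then show ?thesis using ne by simp
    next
      case False
      have "Min (h ` I') \<in> h ` I'" using fI False by (intro Min_in) auto
      then obtain w0 where w0: "w0 \<in> I'" "h w0 = Min (h ` I')" by auto
      have "\<forall>w\<in>I'. h w0 \<le> h w" using w0 fI by auto
      then have "w0 \<in> edom r \<inter> (\<Inter>i\<in>I'. T i)" using w0 sub unfolding T_def by auto
      then show ?thesis by blast
    qed
  qed
  then obtain p where p: "p \<in> edom r" "\<forall>w\<in>edom r. h p \<le> h w" unfolding T_def by auto
  have pall: "\<forall>w. h p \<le> h w"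
  proof
    fix w show "h p \<le> h w"
    proof (cases "w \<in> edom r")
      case True then show ?thesis using p by auto
    next
      case False
      then have "r w = \<infinity>" unfolding edom_def by auto
      then show ?thesis unfolding h_def by simp
    qed
  qed
  have "\<forall>w. h (prox \<alpha> r z) \<le> h w"
    unfolding prox_def h_def[symmetric] by (rule someI[of _ p]) (rule pall)
  then show ?thesis unfolding h_def .
qed

lemma prox_in:
  fixes r :: "'a::euclidean_space \<Rightarrow> ereal"
  assumes proper: "\<forall>x. r x \<noteq> -\<infinity>" and lsc: "lsc_fun r" and cpt: "compact (edom r)"
    and ne: "edom r \<noteq> {}"
  shows "prox \<alpha> r z \<in> edom r"
proof -
  obtain w where w: "w \<in> edom r" using ne by auto
  have "r (prox \<alpha> r z) + ereal (norm (prox \<alpha> r z - z)^2/(2*\<alpha>)) \<le> r w + ereal (norm (w - z)^2/(2*\<alpha>))"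
    using prox_spec[OF assms] by blast
  moreover have "r w + ereal (norm (w - z)^2/(2*\<alpha>)) < \<infinity>"
    using w unfolding edom_def by auto
  ultimately have "r (prox \<alpha> r z) + ereal (norm (prox \<alpha> r z - z)^2/(2*\<alpha>)) < \<infinity>" by auto
  then show ?thesis unfolding edom_def by auto
qed

lemma small_t_limit:
  fixes a b c :: real
  assumes "\<And>t. 0 < t \<Longrightarrow> t < 1 \<Longrightarrow> a \<le> b + t * c" "0 \<le> c"
  shows "a \<le> b"
proof (rule ccontr)
  assume "\<not> a \<le> b"
  then have d: "a - b > 0" by simp
  define t where "t = min (1/2) ((a - b) / (2 * (c + 1)))"
  have t0: "0 < t" "t < 1" using d assms(2) unfolding t_def by auto
  have "t * c \<le> ((a - b) / (2 * (c + 1))) * c"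
    using assms(2) unfolding t_def by (intro mult_right_mono) auto
  also have "\<dots> < a - b"
  proof -
    have "((a - b) / (2 * (c + 1))) * c = (a - b) * (c / (2 * (c + 1)))" by simp
    also have "\<dots> < (a - b) * 1"
      using d assms(2) by (intro mult_strict_left_mono) (auto simp: field_simps)
    finally show ?thesis by simp
  qed
  finally show False using assms(1)[OF t0] by simp
qed

definition vi :: "('a::real_inner \<Rightarrow> ereal) \<Rightarrow> real \<Rightarrow> 'a \<Rightarrow> 'a \<Rightarrow> bool" where
  "vi r \<alpha> z p \<longleftrightarrow> p \<in> edom r \<and>
     (\<forall>w\<in>edom r. real_of_ereal (r p) + inner (z - p) (w - p) / \<alpha> \<le> real_of_ereal (r w))"

lemma norm_add_scaleR_sq:
  fixes u d :: "'a::real_inner"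
  shows "norm (u + t *\<^sub>R d)^2 = norm u ^2 + 2*t*(inner u d) + t^2 * norm d ^2"
  by (simp only: power2_norm_eq_inner) (simp add: inner_add_left inner_add_right inner_commute algebra_simps power2_eq_square)

lemma prox_vi:
  fixes r :: "'a::euclidean_space \<Rightarrow> ereal"
  assumes proper: "\<forall>x. r x \<noteq> -\<infinity>" and lsc: "lsc_fun r" and cpt: "compact (edom r)"
    and ne: "edom r \<noteq> {}" and cvx: "econvex r" and al: "\<alpha> > 0"
  shows "vi r \<alpha> z (prox \<alpha> r z)"
proof -
  define p where "p = prox \<alpha> r z"
  have pin: "p \<in> edom r" unfolding p_def by (rule prox_in[OF proper lsc cpt ne])
  have spec: "\<forall>w. r p + ereal (norm (p - z)^2/(2*\<alpha>)) \<le> r w + ereal (norm (w - z)^2/(2*\<alpha>))"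
    unfolding p_def by (rule prox_spec[OF proper lsc cpt ne])
  have rp: "r p = ereal (real_of_ereal (r p))" by (rule edom_finite[OF proper pin])
  have "real_of_ereal (r p) + inner (z - p) (w - p) / \<alpha> \<le> real_of_ereal (r w)" if win: "w \<in> edom r" for w
  proof -
    have rw: "r w = ereal (real_of_ereal (r w))" by (rule edom_finite[OF proper win])
    define a where "a = real_of_ereal (r p)"
    define b where "b = real_of_ereal (r w)"
    have key: "a - b \<le> inner (p - z) (w - p) / \<alpha> + t * (norm (w - p)^2 / (2*\<alpha>))"
      if t: "0 < t" "t < 1" for t
    proof -
      define y where "y = (1 - t) *\<^sub>R p + t *\<^sub>R w"
      have y2: "y - z = (p - z) + t *\<^sub>R (w - p)" unfolding y_def by (simp add: algebra_simps)
      have "r y \<le> ereal (1 - t) * r p + ereal t * r w"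
        using cvx t unfolding econvex_def y_def by blast
      also have "\<dots> = ereal ((1 - t) * a + t * b)"
        using rp rw unfolding a_def b_def by (metis plus_ereal.simps(1) times_ereal.simps(1))
      finally have ry: "r y \<le> ereal ((1 - t) * a + t * b)" .
      have "ereal (a + norm (p - z)^2/(2*\<alpha>)) \<le> r y + ereal (norm (y - z)^2/(2*\<alpha>))"
        using spec rp unfolding a_def by (metis plus_ereal.simps(1))
      also have "\<dots> \<le> ereal ((1 - t) * a + t * b) + ereal (norm (y - z)^2/(2*\<alpha>))"
        using ry by (rule add_right_mono)
      finally have "a + norm (p - z)^2/(2*\<alpha>) \<le> (1 - t) * a + t * b + norm (y - z)^2/(2*\<alpha>)"
        by simp
      also have "norm (y - z)^2 = norm (p - z)^2 + 2*t*(inner (p - z) (w - p)) + t^2 * norm (w - p)^2"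
        unfolding y2 by (rule norm_add_scaleR_sq)
      finally have f1: "a + norm (p - z)^2/(2*\<alpha>) \<le> (1 - t) * a + t * b +
          (norm (p - z)^2 + (2*t*(inner (p - z) (w - p)) + t^2 * norm (w - p)^2))/(2*\<alpha>)" by (simp add: add.assoc)
      have f2: "(norm (p - z)^2 + (2*t*(inner (p - z) (w - p)) + t^2 * norm (w - p)^2))/(2*\<alpha>)
         = norm (p - z)^2/(2*\<alpha>) + (2*t*(inner (p - z) (w - p)) + t^2 * norm (w - p)^2)/(2*\<alpha>)"
        by (rule add_divide_distrib)
      have "t * (a - b) \<le> (2*t*(inner (p - z) (w - p)) + t^2 * norm (w - p)^2) / (2*\<alpha>)"
        using f1 f2 by (simp add: algebra_simps)
      also have "\<dots> = t * (inner (p - z) (w - p) / \<alpha> + t * (norm (w - p)^2 / (2*\<alpha>)))"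
        using al by (simp add: field_simps power2_eq_square)
      finally show ?thesis using t by simp
    qed
    have "a - b \<le> inner (p - z) (w - p) / \<alpha>"
      by (rule small_t_limit[OF key]) (use al in auto)
    moreover have "inner (z - p) (w - p) = - inner (p - z) (w - p)"
      by (simp add: inner_diff_left)
    ultimately show ?thesis unfolding a_def b_def by (simp add: field_simps)
  qed
  then show ?thesis using pin unfolding vi_def p_def by blast
qed

lemma vi_nonexp:
  fixes p1 p2 z1 z2 :: "'a::real_inner"
  assumes v1: "vi r \<alpha> z1 p1" and v2: "vi r \<alpha> z2 p2" and al: "\<alpha> > 0"
  shows "norm (p1 - p2) \<le> norm (z1 - z2)"
proof -
  have a: "real_of_ereal (r p1) + inner (z1 - p1) (p2 - p1) / \<alpha> \<le> real_of_ereal (r p2)"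
    using v1 v2 unfolding vi_def by blast
  have b: "real_of_ereal (r p2) + inner (z2 - p2) (p1 - p2) / \<alpha> \<le> real_of_ereal (r p1)"
    using v1 v2 unfolding vi_def by blast
  have "inner (z1 - p1) (p2 - p1) / \<alpha> + inner (z2 - p2) (p1 - p2) / \<alpha> \<le> 0" using a b by simp
  then have "inner (z1 - p1) (p2 - p1) + inner (z2 - p2) (p1 - p2) \<le> 0"
    using al by (simp add: add_divide_distrib[symmetric] divide_le_0_iff)
  moreover have "inner (z1 - p1) (p2 - p1) + inner (z2 - p2) (p1 - p2)
      = norm (p1 - p2)^2 - inner (z1 - z2) (p1 - p2)"
    by (simp add: power2_norm_eq_inner inner_diff_left inner_diff_right inner_commute algebra_simps)
  ultimately have "norm (p1 - p2)^2 \<le> inner (z1 - z2) (p1 - p2)" by simp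
  also have "\<dots> \<le> norm (z1 - z2) * norm (p1 - p2)" by (rule norm_cauchy_schwarz)
  finally have h: "norm (p1 - p2) * norm (p1 - p2) \<le> norm (z1 - z2) * norm (p1 - p2)"
    by (simp add: power2_eq_square)
  show ?thesis
  proof (cases "norm (p1 - p2) = 0")
    case True then show ?thesis by simp
  next
    case False then have "norm (p1 - p2) > 0" by simp
    then show ?thesis using h by simp
  qed
qed

lemma opt_vi:
  fixes g :: "'a::euclidean_space \<Rightarrow> real" and r :: "'a \<Rightarrow> ereal"
  assumes proper: "\<forall>x. r x \<noteq> -\<infinity>" and cvx: "econvex r" and pin: "p \<in> edom r"
    and der: "(g has_derivative (\<lambda>h. inner D h)) (at p)"
    and opt: "\<forall>y. ereal (g p) + r p \<le> ereal (g y) + r y" and al: "\<alpha> > 0"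
  shows "vi r \<alpha> (p - \<alpha> *\<^sub>R D) p"
proof -
  have rp: "r p = ereal (real_of_ereal (r p))" by (rule edom_finite[OF proper pin])
  have "real_of_ereal (r p) - inner D (w - p) \<le> real_of_ereal (r w)" if win: "w \<in> edom r" for w
  proof -
    have rw: "r w = ereal (real_of_ereal (r w))" by (rule edom_finite[OF proper win])
    define a where "a = real_of_ereal (r p)"
    define b where "b = real_of_ereal (r w)"
    define d where "d = w - p"
    define f where "f t = g (p + t *\<^sub>R d)" for t :: real
    have bound: "a - b \<le> (f t - f 0) / t" if t: "t \<in> {0<..<1}" for t
    proof -
      have t0: "0 < t" "t < 1" using t by auto
      define y where "y = (1 - t) *\<^sub>R p + t *\<^sub>R w"
      have y2: "y = p + t *\<^sub>R d" unfolding y_def d_def by (simp add: algebra_simps)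
      have "r y \<le> ereal (1 - t) * r p + ereal t * r w"
        using cvx t0 unfolding econvex_def y_def by blast
      also have "\<dots> = ereal ((1 - t) * a + t * b)"
        using rp rw unfolding a_def b_def by (metis plus_ereal.simps(1) times_ereal.simps(1))
      finally have ry: "r y \<le> ereal ((1 - t) * a + t * b)" .
      have "ereal (g p + a) \<le> ereal (g y) + r y"
        using opt rp unfolding a_def by (metis plus_ereal.simps(1))
      also have "\<dots> \<le> ereal (g y) + ereal ((1 - t) * a + t * b)"
        using ry by (rule add_left_mono)
      finally have "g p + a \<le> g y + ((1 - t) * a + t * b)" by simp
      then have "t * (a - b) \<le> f t - f 0" unfolding f_def y2 by (simp add: algebra_simps)
      then show ?thesis using t0 by (simp add: field_simps)
    qed
    have d1: "((\<lambda>t. p + t *\<^sub>R d) has_derivative (\<lambda>t. t *\<^sub>R d)) (at (0::real))"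
      by (intro derivative_eq_intros) auto
    have "((\<lambda>t. g (p + t *\<^sub>R d)) has_derivative (\<lambda>t. inner D (t *\<^sub>R d))) (at (0::real))"
    proof -
      have der': "(g has_derivative (\<lambda>h. inner D h)) (at (p + (0::real) *\<^sub>R d))" using der by simp
      show ?thesis by (rule has_derivative_compose[OF d1 der'])
    qed
    then have "(f has_derivative (\<lambda>t. inner D d * t)) (at 0)"
      unfolding f_def by (simp add: mult.commute)
    then have "(f has_field_derivative inner D d) (at 0)"
      by (simp add: has_field_derivative_def)
    then have "(f has_field_derivative inner D d) (at 0 within {0<..})"
      by (rule has_field_derivative_at_within)
    then have lim: "((\<lambda>t. (f t - f 0) / t) \<longlongrightarrow> inner D d) (at_right 0)"
      by (simp add: has_field_derivative_iff)
    have ev: "eventually (\<lambda>t. a - b \<le> (f t - f 0) / t) (at_right (0::real))"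
      using eventually_at_right_real[of 0 1] by (rule eventually_mono) (auto intro: bound)
    have "a - b \<le> inner D d"
      by (rule tendsto_lowerbound[OF lim ev]) simp
    then show ?thesis unfolding a_def b_def d_def by simp
  qed
  moreover have "inner ((p - \<alpha> *\<^sub>R D) - p) (w - p) / \<alpha> = - inner D (w - p)" for w
    using al by (simp add: inner_diff_left)
  ultimately show ?thesis using pin unfolding vi_def by auto
qed

lemma mix_pow:
  fixes A :: "'n::finite \<Rightarrow> 'n \<Rightarrow> real" and w :: "'n \<Rightarrow> 'a::real_vector"
  shows "(mix A ^^ m) w i = (\<Sum>j\<in>UNIV. matpow A m i j *\<^sub>R w j)"
proof (induction m arbitrary: w i)
  case 0
  have "(\<Sum>j\<in>UNIV. matpow A 0 i j *\<^sub>R w j) = (\<Sum>j\<in>UNIV. (if i = j then w j else 0))"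
    by (rule sum.cong) auto
  then show ?case by simp
next
  case (Suc m)
  have "(mix A ^^ Suc m) w i = (mix A ^^ m) (mix A w) i" by (simp only: funpow_Suc_right comp_def)
  also have "\<dots> = (\<Sum>j\<in>UNIV. matpow A m i j *\<^sub>R (\<Sum>l\<in>UNIV. A j l *\<^sub>R w l))"
    by (simp add: Suc mix_def)
  also have "\<dots> = (\<Sum>j\<in>UNIV. \<Sum>l\<in>UNIV. (matpow A m i j * A j l) *\<^sub>R w l)"
    by (simp add: scaleR_sum_right)
  also have "\<dots> = (\<Sum>l\<in>UNIV. \<Sum>j\<in>UNIV. (matpow A m i j * A j l) *\<^sub>R w l)"
    by (rule sum.swap)
  also have "\<dots> = (\<Sum>l\<in>UNIV. matpow A (Suc m) i l *\<^sub>R w l)"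
    by (simp add: scaleR_sum_left)
  finally show ?case .
qed

lemma mix_pow_add:
  "(mix A ^^ a) ((mix A ^^ b) w) = (mix A ^^ (a + b)) w"
  by (simp add: funpow_add)

lemma mix_pow_sum:
  fixes A :: "'n::finite \<Rightarrow> 'n \<Rightarrow> real" and f :: "'s \<Rightarrow> 'n \<Rightarrow> 'a::real_vector"
  shows "(mix A ^^ m) (\<lambda>i. \<Sum>s\<in>S. f s i) i = (\<Sum>s\<in>S. (mix A ^^ m) (f s) i)"
  by (simp add: mix_pow scaleR_sum_right) (rule sum.swap)

lemma mix_pow_plus:
  fixes A :: "'n::finite \<Rightarrow> 'n \<Rightarrow> real" and u w :: "'n \<Rightarrow> 'a::real_vector"
  shows "(mix A ^^ m) (\<lambda>i. u i + w i) i = (mix A ^^ m) u i + (mix A ^^ m) w i"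
  by (simp add: mix_pow scaleR_add_right sum.distrib)

lemma consensus_term:
  fixes A :: "'n::finite \<Rightarrow> 'n \<Rightarrow> real" and w :: "'n \<Rightarrow> 'a::real_normed_vector"
  assumes geom: "\<forall>k\<ge>1. \<forall>i j. \<bar>matpow A k i j - 1 / real CARD('n)\<bar> \<le> \<theta> * \<beta> ^ k" and m: "m \<ge> 1"
  shows "norm (real CARD('n) *\<^sub>R (mix A ^^ m) w i - (\<Sum>j\<in>UNIV. w j))
          \<le> real CARD('n) * \<theta> * \<beta> ^ m * (\<Sum>j\<in>UNIV. norm (w j))"
proof -
  define n where "n = real CARD('n)"
  have n0: "n > 0" unfolding n_def by simp
  have "n *\<^sub>R (mix A ^^ m) w i - (\<Sum>j\<in>UNIV. w j) = (\<Sum>j\<in>UNIV. (n * (matpow A m i j - 1/n)) *\<^sub>R w j)"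
    using n0 by (simp add: mix_pow scaleR_sum_right sum_subtractf[symmetric] algebra_simps scaleR_diff_left)
  also have "norm \<dots> \<le> (\<Sum>j\<in>UNIV. norm ((n * (matpow A m i j - 1/n)) *\<^sub>R w j))"
    by (rule norm_sum)
  also have "\<dots> \<le> (\<Sum>j\<in>UNIV. (n * \<theta> * \<beta> ^ m) * norm (w j))"
  proof (rule sum_mono)
    fix j
    have "\<bar>matpow A m i j - 1/n\<bar> \<le> \<theta> * \<beta> ^ m" using geom m unfolding n_def by blast
    then have nb: "n * \<bar>matpow A m i j - 1/n\<bar> \<le> n * (\<theta> * \<beta> ^ m)" using n0 by simp
    then show "norm ((n * (matpow A m i j - 1/n)) *\<^sub>R w j) \<le> (n * \<theta> * \<beta> ^ m) * norm (w j)"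
    proof -
      have "norm ((n * (matpow A m i j - 1/n)) *\<^sub>R w j) = (n * \<bar>matpow A m i j - 1/n\<bar>) * norm (w j)"
        using n0 by (simp add: abs_mult)
      also have "\<dots> \<le> (n * (\<theta> * \<beta> ^ m)) * norm (w j)"
        by (rule mult_right_mono[OF nb]) simp
      finally show ?thesis by (simp add: mult.assoc)
    qed
  qed
  also have "\<dots> = n * \<theta> * \<beta> ^ m * (\<Sum>j\<in>UNIV. norm (w j))" by (simp add: sum_distrib_left)
  finally show ?thesis unfolding n_def .
qed

lemma geom_tail:
  fixes \<beta> :: real assumes "0 < \<beta>" "\<beta> < 1"
  shows "(\<Sum>s\<le>k. \<beta> ^ (2*k+1-s)) \<le> \<beta> ^ (k+1) / (1 - \<beta>)"
proof (induction k)
  case 0 then show ?case using assms by (simp add: field_simps)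
next
  case (Suc k)
  have "(\<Sum>s\<le>Suc k. \<beta> ^ (2*Suc k+1-s)) = (\<Sum>s\<le>k. \<beta> ^ (2*Suc k+1-s)) + \<beta> ^ (k+2)"
    by simp
  also have "(\<Sum>s\<le>k. \<beta> ^ (2*Suc k+1-s)) = \<beta>^2 * (\<Sum>s\<le>k. \<beta> ^ (2*k+1-s))"
    unfolding sum_distrib_left
  proof (rule sum.cong)
    fix s assume "s \<in> {..k}"
    then have "2*Suc k+1-s = (2*k+1-s) + 2" by auto
    then show "\<beta> ^ (2*Suc k+1-s) = \<beta>^2 * \<beta> ^ (2*k+1-s)" by (simp only: power_add mult.commute)
  qed simp
  also have "\<beta>^2 * (\<Sum>s\<le>k. \<beta> ^ (2*k+1-s)) \<le> \<beta>^2 * (\<beta> ^ (k+1) / (1 - \<beta>))"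
    using Suc assms by (intro mult_left_mono) auto
  finally have "(\<Sum>s\<le>Suc k. \<beta> ^ (2*Suc k+1-s)) \<le> \<beta>^2 * (\<beta> ^ (k+1) / (1 - \<beta>)) + \<beta> ^ (k+2)"
    by simp
  also have "\<dots> = \<beta> ^ (Suc k+1) / (1 - \<beta>)"
    using assms by (simp add: field_simps power2_eq_square)
  finally show ?case .
qed

lemma N_lower:
  assumes "s \<le> k"
  shows "2*k+1-s \<le> (\<Sum>t\<in>{s..<Suc k}. t + 1)"
proof -
  have "(\<Sum>t\<in>{s..<Suc k}. t + 1) = (\<Sum>t\<in>{s..<k}. t + 1) + (k + 1)"
    using assms by simp
  moreover have "(\<Sum>t\<in>{s..<k}. (1::nat)) \<le> (\<Sum>t\<in>{s..<k}. t + 1)"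
    by (rule sum_mono) simp
  ultimately show ?thesis by simp
qed

lemma tracking:
  fixes A :: "'n::finite \<Rightarrow> 'n \<Rightarrow> real" and x v :: "nat \<Rightarrow> 'n \<Rightarrow> 'a::real_normed_vector"
  assumes geom: "\<forall>k\<ge>1. \<forall>i j. \<bar>matpow A k i j - 1 / real CARD('n)\<bar> \<le> \<theta> * \<beta> ^ k"
    and b: "0 < \<beta>" "\<beta> < 1" and th: "0 \<le> \<theta>"
    and v0: "v 0 = x 0"
    and vS: "\<forall>k. v (Suc k) = (\<lambda>i. (mix A ^^ (k+1)) (v k) i + x (Suc k) i - x k i)"
    and D: "\<forall>k. (\<Sum>j\<in>UNIV. norm (x k j)) \<le> D"
  shows "norm (real CARD('n) *\<^sub>R (mix A ^^ (k+1)) (v k) i - (\<Sum>j\<in>UNIV. x k j))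
          \<le> real CARD('n) * \<theta> * (2*D) * (\<beta>^(k+1)/(1-\<beta>))"
proof -
  define n where "n = real CARD('n)"
  define d where "d s = (if s = 0 then x 0 else (\<lambda>i. x s i - x (s-1) i))" for s
  define N where "N k s = (\<Sum>t\<in>{s..<k}. t + 1)" for k s :: nat
  have NS: "N (Suc k) s = (k + 1) + N k s" if "s \<le> k" for k s
    using that unfolding N_def by simp
  have closed: "v k = (\<lambda>i. \<Sum>s\<le>k. (mix A ^^ N k s) (d s) i)" for k
  proof (induction k)
    case 0 then show ?case using v0 unfolding N_def d_def by simp
  next
    case (Suc k)
    show ?case
    proof
      fix i
      have "v (Suc k) i = (mix A ^^ (k+1)) (v k) i + d (Suc k) i"
        using vS unfolding d_def by simp
      also have "(mix A ^^ (k+1)) (v k) i = (\<Sum>s\<le>k. (mix A ^^ N (Suc k) s) (d s) i)"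
        unfolding Suc mix_pow_sum mix_pow_add
        by (rule sum.cong) (auto simp: NS)
      also have "d (Suc k) i = (mix A ^^ N (Suc k) (Suc k)) (d (Suc k)) i"
        unfolding N_def by simp
      finally show "v (Suc k) i = (\<Sum>s\<le>Suc k. (mix A ^^ N (Suc k) s) (d s) i)"
        by simp
    qed
  qed
  have vhat: "(mix A ^^ (k+1)) (v k) i = (\<Sum>s\<le>k. (mix A ^^ N (Suc k) s) (d s) i)"
    unfolding closed[of k] mix_pow_sum mix_pow_add
    by (rule sum.cong) (auto simp: NS)
  have tele: "(\<Sum>s\<le>k. d s j) = x k j" for k j
    by (induction k) (auto simp: d_def)
  have sumx: "(\<Sum>j\<in>UNIV. x k j) = (\<Sum>s\<le>k. \<Sum>j\<in>UNIV. d s j)"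
    by (subst sum.swap) (simp add: tele)
  have dD: "(\<Sum>j\<in>UNIV. norm (d s j)) \<le> 2 * D" for s
  proof (cases "s = 0")
    case True
    have "0 \<le> D" using D by (metis order.trans sum_nonneg norm_ge_zero)
    moreover have "(\<Sum>j\<in>UNIV. norm (x 0 j)) \<le> D" using D by blast
    ultimately show ?thesis using True unfolding d_def by simp
  next
    case False
    have "(\<Sum>j\<in>UNIV. norm (d s j)) \<le> (\<Sum>j\<in>UNIV. norm (x s j) + norm (x (s-1) j))"
      using False unfolding d_def by (auto intro!: sum_mono norm_triangle_ineq4)
    also have "\<dots> \<le> 2 * D"
    proof -
      have "(\<Sum>j\<in>UNIV. norm (x s j)) \<le> D" "(\<Sum>j\<in>UNIV. norm (x (s-1) j)) \<le> D" using D by blast+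
      then show ?thesis by (simp add: sum.distrib)
    qed
    finally show ?thesis .
  qed
  have "n *\<^sub>R (mix A ^^ (k+1)) (v k) i - (\<Sum>j\<in>UNIV. x k j)
        = (\<Sum>s\<le>k. n *\<^sub>R (mix A ^^ N (Suc k) s) (d s) i - (\<Sum>j\<in>UNIV. d s j))"
    unfolding vhat sumx by (simp add: scaleR_sum_right sum_subtractf)
  also have "norm \<dots> \<le> (\<Sum>s\<le>k. norm (n *\<^sub>R (mix A ^^ N (Suc k) s) (d s) i - (\<Sum>j\<in>UNIV. d s j)))"
    by (rule norm_sum)
  also have "\<dots> \<le> (\<Sum>s\<le>k. n * \<theta> * (2 * D) * \<beta> ^ (2*k+1-s))"
  proof (rule sum_mono)
    fix s assume s: "s \<in> {..k}"
    have N1: "N (Suc k) s \<ge> 1" using s unfolding N_def by (simp add: sum.atLeast_Suc_lessThan) 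
    have N2: "2*k+1-s \<le> N (Suc k) s" using s N_lower unfolding N_def by simp
    have "norm (n *\<^sub>R (mix A ^^ N (Suc k) s) (d s) i - (\<Sum>j\<in>UNIV. d s j))
          \<le> n * \<theta> * \<beta> ^ N (Suc k) s * (\<Sum>j\<in>UNIV. norm (d s j))"
      unfolding n_def by (rule consensus_term[OF geom N1])
    also have "\<dots> \<le> n * \<theta> * \<beta> ^ (2*k+1-s) * (2 * D)"
    proof (intro mult_mono mult_left_mono)
      show "\<beta> ^ N (Suc k) s \<le> \<beta> ^ (2*k+1-s)" using b N2 by (intro power_decreasing) auto
      show "(\<Sum>j\<in>UNIV. norm (d s j)) \<le> 2 * D" by (rule dD)
    qed (use th b in \<open>auto simp: n_def intro!: sum_nonneg\<close>)
    finally show "norm (n *\<^sub>R (mix A ^^ N (Suc k) s) (d s) i - (\<Sum>j\<in>UNIV. d s j))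
          \<le> n * \<theta> * (2 * D) * \<beta> ^ (2*k+1-s)" by (simp add: algebra_simps)
  qed
  also have "\<dots> = n * \<theta> * (2 * D) * (\<Sum>s\<le>k. \<beta> ^ (2*k+1-s))"
    by (simp add: sum_distrib_left)
  also have "\<dots> \<le> n * \<theta> * (2 * D) * (\<beta>^(k+1)/(1-\<beta>))"
  proof (rule mult_left_mono)
    show "(\<Sum>s\<le>k. \<beta> ^ (2*k+1-s)) \<le> \<beta>^(k+1)/(1-\<beta>)" by (rule geom_tail[OF b])
    have "0 \<le> D" using D by (metis order.trans sum_nonneg norm_ge_zero)
    then show "0 \<le> n * \<theta> * (2 * D)" using th unfolding n_def by simp
  qed
  finally show ?thesis unfolding n_def .
qed

lemma K_bound:
  fixes \<beta> :: real assumes b: "0 < \<beta>" "\<beta> < 1"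
  shows "2 / (1 - \<beta>) \<le> exp 1 * sqrt (1 / ln (\<beta> powr (-1/2)))
           + (2 + ln (1 / \<beta>)) / (\<beta> powr (1/2) * ln (1 / \<beta>))"
proof -
  define L where "L = ln (1 / \<beta>)"
  define s where "s = sqrt \<beta>"
  have L0: "L > 0" unfolding L_def using b by simp
  have L1: "L \<le> 1/\<beta> - 1" unfolding L_def using b by (intro ln_le_minus_one) auto
  have s0: "s > 0" unfolding s_def using b by simp
  have s2: "s * s = \<beta>" unfolding s_def using b by simp
  have sp: "\<beta> powr (1/2) = s" unfolding s_def using b by (simp add: powr_half_sqrt)
  have lnpos: "ln (\<beta> powr (-1/2)) > 0" using b by (simp add: ln_powr)
  have sq0: "0 \<le> exp 1 * sqrt (1 / ln (\<beta> powr (-1/2)))" using lnpos by simp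
  have "L * \<beta> \<le> 1 - \<beta>" using L1 b by (simp add: field_simps)
  then have "2 * \<beta> / (1 - \<beta>) \<le> 2 / L"
    using L0 b by (simp add: field_simps)
  have e1: "(2 + L) / (s * L) = 2 / (s * L) + 1 / s" using s0 L0 by (simp add: field_simps)
  have e2: "2 * s / (1 - \<beta>) \<le> 2 / (s * L)"
  proof -
    have ne: "1 - \<beta> \<noteq> 0" using b by simp
    have "(2 * \<beta> / (1 - \<beta>)) / s = 2 * (s * s) / ((1 - \<beta>) * s)" using s2 by simp
    also have "\<dots> = 2 * s / (1 - \<beta>)" using s0 ne by (simp add: field_simps)
    finally have "2 * s / (1 - \<beta>) = (2 * \<beta> / (1 - \<beta>)) / s" by simp
    also have "\<dots> \<le> (2 / L) / s" using \<open>2 * \<beta> / (1 - \<beta>) \<le> 2 / L\<close> s0 by (intro divide_right_mono) auto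
    finally show ?thesis by (simp add: mult.commute)
  qed
  have e3: "2 / (1 - \<beta>) \<le> 2 * s / (1 - \<beta>) + 1 / s"
  proof -
    have "(s - 1)^2 \<ge> 0" by simp
    then have "2 * s \<le> 2 * (s * s) + (1 - s * s)" by (simp add: power2_eq_square algebra_simps)
    then have "2 * s \<le> 2 * \<beta> + (1 - \<beta>)" using s2 by simp
    then have h: "2 \<le> (2 * \<beta> + (1 - \<beta>)) / s" using s0 by (simp add: field_simps)
    then have "2 / (1 - \<beta>) \<le> ((2 * \<beta> + (1 - \<beta>)) / s) / (1 - \<beta>)"
      using b by (intro divide_right_mono) auto
    also have "\<dots> = (2 * \<beta> + (1 - \<beta>)) / (s * (1 - \<beta>))" by simp
    finally have "2 / (1 - \<beta>) \<le> (2 * \<beta> + (1 - \<beta>)) / (s * (1 - \<beta>))" .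
    also have "\<dots> = 2 * s / (1 - \<beta>) + 1 / s"
    proof -
      have ne: "1 - \<beta> \<noteq> 0" using b by simp
      have "(2 * \<beta> + (1 - \<beta>)) / (s * (1 - \<beta>)) = 2 * \<beta> / (s * (1 - \<beta>)) + (1 - \<beta>) / (s * (1 - \<beta>))"
        by (rule add_divide_distrib)
      also have "2 * \<beta> / (s * (1 - \<beta>)) = 2 * s / (1 - \<beta>)"
      proof -
        have "2 * \<beta> / (s * (1 - \<beta>)) = 2 * (s * s) / (s * (1 - \<beta>))" using s2 by simp
        also have "\<dots> = 2 * s / (1 - \<beta>)" using s0 ne by (simp add: field_simps)
        finally show ?thesis .
      qed
      also have "(1 - \<beta>) / (s * (1 - \<beta>)) = 1 / s" using s0 ne by simp
      finally show ?thesis .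
    qed
    finally show ?thesis .
  qed
  have "2 / (1 - \<beta>) \<le> (2 + L) / (s * L)" using e1 e2 e3 by simp
  then show ?thesis using sq0 sp unfolding L_def by simp
qed

lemma norm_sq_add_le:
  fixes x y :: "'a::real_normed_vector"
  shows "norm (x + y)^2 \<le> 2 * norm x^2 + 2 * norm y^2"
proof -
  have "norm (x + y) \<le> norm x + norm y" by (rule norm_triangle_ineq)
  then have "norm (x + y)^2 \<le> (norm x + norm y)^2" by (rule power_mono) simp
  also have "\<dots> \<le> 2 * norm x^2 + 2 * norm y^2"
    using sum_squares_ge_zero[of "norm x - norm y" 0]
    by (simp add: power2_eq_square algebra_simps)
  finally show ?thesis .
qed

lemma step_ineq:
  fixes u a e d :: "'a::real_inner"
  assumes al: "\<alpha> \<ge> 0"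
  shows "norm (u - \<alpha> *\<^sub>R (a + e + d))^2 \<le> (1 + \<alpha>^2) * norm u^2 - 2*\<alpha>*inner u a
     + (1 + 2*\<alpha>^2) * norm e^2 + 4*\<alpha>^2*norm a^2 + 2*\<alpha>*(norm u*norm d) + 4*\<alpha>^2*norm d^2"
proof -
  define w where "w = a + e + d"
  have exp: "norm (u - \<alpha> *\<^sub>R w)^2 = norm u^2 - 2*\<alpha>*inner u w + \<alpha>^2 * norm w^2"
    by (simp only: power2_norm_eq_inner)
       (simp add: inner_diff_left inner_diff_right inner_commute algebra_simps power2_eq_square)
  have uw: "inner u w = inner u a + inner u e + inner u d"
    unfolding w_def by (simp add: inner_add_right)
  have ue: "- 2*\<alpha>*inner u e \<le> \<alpha>^2 * norm u^2 + norm e^2"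
  proof -
    have "0 \<le> norm (\<alpha> *\<^sub>R u + e)^2" by simp
    also have "norm (\<alpha> *\<^sub>R u + e)^2 = \<alpha>^2 * norm u^2 + 2*\<alpha>*inner u e + norm e^2"
      by (simp only: power2_norm_eq_inner)
         (simp add: inner_add_left inner_add_right inner_commute algebra_simps power2_eq_square)
    finally show ?thesis by simp
  qed
  have ud: "- 2*\<alpha>*inner u d \<le> 2*\<alpha>*(norm u*norm d)"
  proof -
    have "- inner u d \<le> norm u * norm d"
      using norm_cauchy_schwarz[of u "- d"] by simp
    then have "2*\<alpha> * (- inner u d) \<le> 2*\<alpha> * (norm u * norm d)"
      using al by (intro mult_left_mono) auto
    then show ?thesis by simp
  qed
  have ww: "norm w^2 \<le> 4 * norm a^2 + 2 * norm e^2 + 4 * norm d^2"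
  proof -
    have "w = (a + d) + e" unfolding w_def by (simp add: algebra_simps)
    then have "norm w^2 \<le> 2 * norm (a + d)^2 + 2 * norm e^2" using norm_sq_add_le by metis
    also have "norm (a + d)^2 \<le> 2 * norm a^2 + 2 * norm d^2" by (rule norm_sq_add_le)
    finally show ?thesis by simp
  qed
  have "\<alpha>^2 * norm w^2 \<le> \<alpha>^2 * (4 * norm a^2 + 2 * norm e^2 + 4 * norm d^2)"
    using ww by (rule mult_left_mono) simp
  then show ?thesis unfolding w_def[symmetric] exp uw using ue ud
    by (simp add: algebra_simps)
qed

theorem proposition2:
  fixes A :: "'n::finite \<Rightarrow> 'n \<Rightarrow> real" and Eg :: "'n \<Rightarrow> 'n \<Rightarrow> bool"
    and \<theta> \<beta> :: real
    and r :: "'n \<Rightarrow> 'a::euclidean_space \<Rightarrow> ereal"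
    and \<psi> :: "'n \<Rightarrow> 'a \<Rightarrow> 'a \<Rightarrow> 'b \<Rightarrow> real" and P :: "'n \<Rightarrow> 'b measure"
    and \<phi> :: "'n \<Rightarrow> ('n \<Rightarrow> 'a) \<Rightarrow> 'a"
    and F :: "'n \<Rightarrow> 'a \<Rightarrow> 'a \<Rightarrow> 'a" and G :: "'n \<Rightarrow> 'a \<Rightarrow> 'a \<Rightarrow> 'b \<Rightarrow> 'a"
    and xs :: "'n \<Rightarrow> 'a"
    and M :: "'w measure" and \<xi> :: "'n \<Rightarrow> nat \<Rightarrow> nat \<Rightarrow> 'w \<Rightarrow> 'b"
    and x0 :: "'n \<Rightarrow> 'a"
    and \<alpha> \<rho> \<eta>\<phi> L\<phi> :: real and L \<nu>1 \<nu>2 :: "'n \<Rightarrow> real"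
    and S :: "nat \<Rightarrow> nat"
    and \<gamma> \<nu>1b \<nu>2b_sq Lt rho_phi \<nu>b_sq DR C1 C2 C3 :: real
  defines "n \<equiv> real CARD('n)"
    and "f \<equiv> (\<lambda>i y z. \<integral>s. \<psi> i y z s \<partial>P i)"
    and "Rset \<equiv> {x. \<forall>i. x i \<in> edom (r i)}"
    and "X \<equiv> vs_x \<alpha> A r G S (\<lambda>k. k + 1) \<xi> x0"
    and "Vh \<equiv> vs_vhat \<alpha> A r G S (\<lambda>k. k + 1) \<xi> x0"
    and "e \<equiv> vs_err \<alpha> A r G F S (\<lambda>k. k + 1) \<xi> x0"
  \<comment> \<open>constants of the statement\<close>
  assumes "\<gamma> = max \<rho> \<beta>"
    and "\<nu>1b = Max (range \<nu>1)"
    and "\<nu>2b_sq = (\<Sum>i\<in>UNIV. (\<nu>2 i)\<^sup>2)"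
    and "Lt = sqrt (1/2 + (1 + 2 * \<alpha>\<^sup>2) * \<nu>1b\<^sup>2 + 2 * L\<phi>\<^sup>2)"
    and "rho_phi = 1 - 2 * \<alpha> * \<eta>\<phi> + 2 * \<alpha>\<^sup>2 * Lt\<^sup>2"
    and "\<nu>b_sq = (1 + 2 * \<alpha>\<^sup>2) * (2 * \<nu>1b\<^sup>2 * sq_norm xs + \<nu>2b_sq)"
    and "DR = (\<Sum>j\<in>UNIV. Sup (norm ` edom (r j)))"
    and "C1 = \<theta> * DR"
    and "C2 = 2 * \<theta> * DR * (exp 1 * sqrt (1 / ln (\<beta> powr (-1/2)))
                 + (2 + ln (1 / \<beta>)) / (\<beta> powr (1/2) * ln (1 / \<beta>)))"
    and "C3 = \<alpha>\<^sup>2 * \<nu>b_sq + 4 * \<alpha> * n * DR * (C1 + C2) * (\<Sum>i\<in>UNIV. L i)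
              + 4 * \<alpha>\<^sup>2 * n\<^sup>2 * \<beta> * (C1\<^sup>2 + C2\<^sup>2) * (\<Sum>i\<in>UNIV. (L i)\<^sup>2)"
  \<comment> \<open>(a) regularizers: proper, lsc, convex, compact effective domain\<close>
    and r_proper: "\<forall>i x. r i x \<noteq> -\<infinity>"
    and r_lsc: "\<forall>i. lsc_fun (r i)"
    and r_convex: "\<forall>i. econvex (r i)"
    and r_compact: "\<forall>i. compact (edom (r i))"
  \<comment> \<open>the random data xi_i and the expected-value cost f_i\<close>
    and P_prob: "\<forall>i. prob_space (P i)"
    and psi_int: "\<forall>x\<in>Rset. \<forall>i. integrable (P i) (\<psi> i (x i) (\<Sum>j\<in>UNIV. x j))"
  \<comment> \<open>(b) phi_i is the gradient of the convex C^1 map x_i |-> f_i(x_i, x_i + xbar_{-i})\<close>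
    and f_convex: "\<forall>x\<in>Rset. \<forall>i. convex_on (edom (r i)) (\<lambda>y. f i y (y + others x i))"
    and phi_grad: "\<forall>x\<in>Rset. \<forall>i.
          ((\<lambda>y. f i y (y + others x i)) has_derivative (\<lambda>h. \<phi> i x \<bullet> h)) (at (x i))"
    and phi_cont: "\<forall>x\<in>Rset. \<forall>i. continuous_on (edom (r i)) (\<lambda>y. \<phi> i (x(i := y)))"
  \<comment> \<open>(c) sample functions differentiable; G is the sampled gradient\<close>
    and G_grad: "\<forall>x\<in>Rset. \<forall>i s.
          ((\<lambda>y. \<psi> i y (y + others x i) s) has_derivative
             (\<lambda>h. G i (x i) (\<Sum>j\<in>UNIV. x j) s \<bullet> h)) (at (x i))"
    and F_phi: "\<forall>x\<in>Rset. \<forall>i. F i (x i) (\<Sum>j\<in>UNIV. x j) = \<phi> i x"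
    and G_meas: "\<forall>i. (\<lambda>(y, z, s). G i y z s) \<in> borel_measurable (borel \<Otimes>\<^sub>M (borel \<Otimes>\<^sub>M P i))"
    and G_unbiased: "\<forall>i. \<forall>y\<in>edom (r i). \<forall>z.
          integrable (P i) (G i y z) \<and> (\<integral>s. G i y z s \<partial>P i) = F i y z"
  \<comment> \<open>Nash equilibrium\<close>
    and xs_R: "xs \<in> Rset"
    and xs_NE: "\<forall>i y. ereal (f i (xs i) (\<Sum>j\<in>UNIV. xs j)) + r i (xs i)
                     \<le> ereal (f i y (y + others xs i)) + r i y"
  \<comment> \<open>network\<close>
    and Eg_sym: "\<forall>i j. Eg i j = Eg j i"
    and Eg_conn: "\<forall>i j. Eg\<^sup>*\<^sup>* i j"
    and A_pos: "\<forall>i j. (j = i \<or> Eg i j) \<longrightarrow> A i j > 0"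
    and A_zero: "\<forall>i j. \<not> (j = i \<or> Eg i j) \<longrightarrow> A i j = 0"
    and A_sym: "\<forall>i j. A i j = A j i"
    and A_stoch: "\<forall>i. (\<Sum>j\<in>UNIV. A i j) = 1"
    and theta_pos: "\<theta> > 0" and beta: "0 < \<beta>" "\<beta> < 1"
    and A_geom: "\<forall>k\<ge>1. \<forall>i j. \<bar>matpow A k i j - 1 / n\<bar> \<le> \<theta> * \<beta> ^ k"
  \<comment> \<open>(ii), (iii) strong monotonicity and Lipschitz continuity of phi on R\<close>
    and eta_pos: "\<eta>\<phi> > 0"
    and phi_strmono: "\<forall>x\<in>Rset. \<forall>y\<in>Rset.
          (\<Sum>i\<in>UNIV. (\<phi> i x - \<phi> i y) \<bullet> (x i - y i)) \<ge> \<eta>\<phi> * sq_dist x y"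
    and phi_lip: "\<forall>x\<in>Rset. \<forall>y\<in>Rset.
          sqrt (sq_dist (\<lambda>i. \<phi> i x) (\<lambda>i. \<phi> i y)) \<le> L\<phi> * sqrt (sq_dist x y)"
  \<comment> \<open>algorithm parameters and sampling\<close>
    and alpha_pos: "\<alpha> > 0" and rho: "0 < \<rho>" "\<rho> < 1"
    and S_def: "\<forall>k. S k = nat \<lceil>(1 / \<alpha>\<^sup>2) * (1 / \<rho>) ^ (k + 1)\<rceil>"
    and x0_R: "\<forall>i. x0 i \<in> edom (r i)"
    and M_prob: "prob_space M"
    and xi_meas: "\<forall>i k p. \<xi> i k p \<in> measurable M (P i)"
    and xi_distr: "\<forall>i k p. distr M (P i) (\<xi> i k p) = P i"
    and xi_indep: "prob_space.indep_vars M (\<lambda>(i, k, p). P i) (\<lambda>(i, k, p). \<xi> i k p)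
                     {(i, k, p). 1 \<le> p \<and> p \<le> S k}"
  \<comment> \<open>(iv) local Lipschitz continuity of F_i in its aggregate argument\<close>
    and F_lip: "\<exists>cz>0. (\<forall>k i. \<forall>\<omega>\<in>space M.
                    norm (n *\<^sub>R Vh k \<omega> i) \<le> cz \<and> norm (\<Sum>j\<in>UNIV. X k \<omega> j) \<le> cz)
               \<and> (\<forall>i. \<forall>y\<in>edom (r i). \<forall>z1 z2. norm z1 \<le> cz \<longrightarrow> norm z2 \<le> cz \<longrightarrow>
                    norm (F i y z1 - F i y z2) \<le> L i * norm (z1 - z2))"
  \<comment> \<open>(v) conditional second-moment bound on the sampling error\<close>
    and nu_pos: "\<forall>i. \<nu>1 i > 0 \<and> \<nu>2 i > 0"
    and err_var: "\<forall>i k. AE \<omega> in M.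
          nn_cond_exp M (nat_filt M X k) (\<lambda>\<omega>. ennreal ((norm (e k i \<omega>))\<^sup>2)) \<omega>
            \<le> ennreal (((\<nu>1 i)\<^sup>2 * (norm (X k \<omega> i))\<^sup>2 + (\<nu>2 i)\<^sup>2) / real (S k))"
  shows "\<forall>k. (\<integral>\<omega>. sq_dist (X (Suc k) \<omega>) xs \<partial>M)
              \<le> rho_phi * (\<integral>\<omega>. sq_dist (X k \<omega>) xs \<partial>M) + C3 * \<gamma> ^ (k + 1)"
proof -
  interpret M: prob_space M by (rule M_prob)
  note gam = assms(7) and nu1b = assms(8) and nu2b = assms(9) and Lt_def = assms(10)
    and rho_def = assms(11) and nub_def = assms(12) and DR_def = assms(13) and C1_def = assms(14)
    and C2_def = assms(15) and C3_def = assms(16)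
  have n0: "n > 0" unfolding n_def by simp
  have ne: "edom (r i) \<noteq> {}" for i using x0_R by blast
  have proper: "\<forall>x. r i x \<noteq> -\<infinity>" for i using r_proper by blast
  have lsc: "lsc_fun (r i)" for i using r_lsc by blast
  have cvx: "econvex (r i)" for i using r_convex by blast
  have cpt: "compact (edom (r i))" for i using r_compact by blast
  define V where "V k \<omega> = snd (vspgr \<alpha> A r G S (\<lambda>k. k + 1) \<xi> x0 k \<omega>)" for k \<omega>
  have X0: "X 0 \<omega> = x0" for \<omega> unfolding X_def vs_x_def by simp
  have V0: "V 0 \<omega> = x0" for \<omega> unfolding V_def by simp
  have VhV: "Vh k \<omega> = (mix A ^^ (k+1)) (V k \<omega>)" for k \<omega> unfolding Vh_def vs_vhat_def V_def by simp
  have XS: "X (Suc k) \<omega> = (\<lambda>i. prox \<alpha> (r i) (X k \<omega> i - (\<alpha> / real (S k)) *\<^sub>R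
      (\<Sum>p\<in>{1..S k}. G i (X k \<omega> i) (n *\<^sub>R Vh k \<omega> i) (\<xi> i k p \<omega>))))" for k \<omega>
    unfolding X_def vs_x_def Vh_def vs_vhat_def n_def vspgr.simps(2) Let_def fst_conv by (rule refl)
  have VS: "V (Suc k) \<omega> = (\<lambda>i. Vh k \<omega> i + X (Suc k) \<omega> i - X k \<omega> i)" for k \<omega>
    unfolding X_def vs_x_def Vh_def vs_vhat_def V_def vspgr.simps(2) Let_def fst_conv snd_conv by (rule refl)
  have e_eq: "e k i \<omega> = (1 / real (S k)) *\<^sub>R (\<Sum>p\<in>{1..S k}. G i (X k \<omega> i) (n *\<^sub>R Vh k \<omega> i) (\<xi> i k p \<omega>))
       - F i (X k \<omega> i) (n *\<^sub>R Vh k \<omega> i)" for k i \<omega>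
    unfolding e_def vs_err_def X_def Vh_def n_def Let_def by (rule refl)
  have XR: "X k \<omega> i \<in> edom (r i)" for k \<omega> i
  proof (induction k arbitrary: i)
    case 0 then show ?case using X0 x0_R by simp
  next
    case (Suc k) then show ?case unfolding XS by (simp add: prox_in[OF proper lsc cpt ne])
  qed
  have XRset: "X k \<omega> \<in> Rset" for k \<omega> unfolding Rset_def using XR by blast
  define Bd where "Bd i = Sup (norm ` edom (r i))" for i
  have bdd: "bdd_above (norm ` edom (r i))" for i
  proof -
    have "compact (norm ` edom (r i))"
      by (rule compact_continuous_image[OF _ cpt]) (intro continuous_intros)
    then show ?thesis by (intro bounded_imp_bdd_above compact_imp_bounded)
  qed
  have normB: "norm y \<le> Bd i" if "y \<in> edom (r i)" for y i
    unfolding Bd_def using bdd that by (intro cSup_upper) auto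
  have Bd0: "0 \<le> Bd i" for i using normB[OF x0_R[rule_format, of i]] by (meson norm_ge_zero order.trans)
  have DR_eq: "DR = (\<Sum>i\<in>UNIV. Bd i)" using DR_def unfolding Bd_def by simp
  have DR0: "0 \<le> DR" unfolding DR_eq using Bd0 by (simp add: sum_nonneg)
  have BdDR: "Bd i \<le> DR" for i unfolding DR_eq using Bd0 by (intro member_le_sum) auto
  have sumX: "(\<Sum>j\<in>UNIV. norm (X k \<omega> j)) \<le> DR" for k \<omega>
    unfolding DR_eq by (intro sum_mono normB XR)
  have xsR: "xs i \<in> edom (r i)" for i using xs_R unfolding Rset_def by blast
  obtain cz where cz: "cz > 0"
    and czb: "\<forall>k i. \<forall>\<omega>\<in>space M. norm (n *\<^sub>R Vh k \<omega> i) \<le> cz \<and> norm (\<Sum>j\<in>UNIV. X k \<omega> j) \<le> cz"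
    and Flip: "\<forall>i. \<forall>y\<in>edom (r i). \<forall>z1 z2. norm z1 \<le> cz \<longrightarrow> norm z2 \<le> cz \<longrightarrow>
                    norm (F i y z1 - F i y z2) \<le> L i * norm (z1 - z2)"
    using F_lip by blast
  have L0: "0 \<le> L i" for i
  proof -
    obtain b :: 'a where b: "b \<in> Basis" using nonempty_Basis by blast
    have nb: "norm (cz *\<^sub>R b) = cz" using b cz by simp
    have "norm (F i (x0 i) 0 - F i (x0 i) (cz *\<^sub>R b)) \<le> L i * norm (0 - cz *\<^sub>R b)"
      using Flip x0_R nb cz by (metis less_eq_real_def norm_zero)
    then have "0 \<le> L i * cz" using nb by (metis norm_ge_zero order.trans norm_minus_cancel diff_0)
    then show ?thesis using cz by (simp add: zero_le_mult_iff)
  qed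
  have others_sum: "x i + others x i = (\<Sum>j\<in>UNIV. x j)" for x :: "'n \<Rightarrow> 'a" and i
    unfolding others_def by (simp add: sum.remove[of UNIV i])
  have vi_xs: "vi (r i) \<alpha> (xs i - \<alpha> *\<^sub>R \<phi> i xs) (xs i)" for i
  proof (rule opt_vi[OF proper cvx xsR])
    show "((\<lambda>y. f i y (y + others xs i)) has_derivative (\<lambda>h. inner (\<phi> i xs) h)) (at (xs i))"
      using phi_grad xs_R by blast
    show "\<forall>y. ereal (f i (xs i) (xs i + others xs i)) + r i (xs i) \<le> ereal (f i y (y + others xs i)) + r i y"
      using xs_NE others_sum[of xs i] by simp
  qed (rule alpha_pos)
  have vi_X: "vi (r i) \<alpha> z (prox \<alpha> (r i) z)" for i z
    by (rule prox_vi[OF proper lsc cpt ne cvx alpha_pos])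
  define tb where "tb k = n * \<theta> * (2 * DR) * (\<beta>^(k+1) / (1 - \<beta>))" for k :: nat
  have track: "norm (n *\<^sub>R Vh k \<omega> i - (\<Sum>j\<in>UNIV. X k \<omega> j)) \<le> tb k" for k \<omega> i
  proof -
    have "norm (real CARD('n) *\<^sub>R (mix A ^^ (k+1)) ((\<lambda>k. V k \<omega>) k) i - (\<Sum>j\<in>UNIV. (\<lambda>k. X k \<omega>) k j))
          \<le> real CARD('n) * \<theta> * (2*DR) * (\<beta>^(k+1)/(1-\<beta>))"
    proof (rule tracking[OF A_geom[unfolded n_def] beta])
      show "0 \<le> \<theta>" using theta_pos by simp
      show "V 0 \<omega> = X 0 \<omega>" using X0 V0 by simp
      show "\<forall>k. V (Suc k) \<omega> = (\<lambda>i. (mix A ^^ (k+1)) (V k \<omega>) i + X (Suc k) \<omega> i - X k \<omega> i)"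
        using VS VhV by simp
      show "\<forall>k. (\<Sum>j\<in>UNIV. norm (X k \<omega> j)) \<le> DR" using sumX by blast
    qed
    then show ?thesis unfolding tb_def VhV n_def by simp
  qed
  define Kc where "Kc = exp 1 * sqrt (1 / ln (\<beta> powr (-1/2)))
                 + (2 + ln (1 / \<beta>)) / (\<beta> powr (1/2) * ln (1 / \<beta>))"
  have Kc: "2 / (1 - \<beta>) \<le> Kc" unfolding Kc_def by (rule K_bound[OF beta])
  have Kc0: "0 \<le> Kc" using Kc beta by (smt (verit) divide_pos_pos)
  have C2K: "C2 = 2 * (\<theta> * DR) * Kc" using C2_def unfolding Kc_def by simp
  have C1c: "C1 = \<theta> * DR" using C1_def .
  have c0: "0 \<le> \<theta> * DR" using theta_pos DR0 by simp
  have bg: "\<beta> \<le> \<gamma>" using gam by simp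
  have rg: "\<rho> \<le> \<gamma>" using gam by simp
  have bpow: "\<beta>^(k+1) \<le> \<gamma>^(k+1)" for k using bg beta by (intro power_mono) auto
  have bpow1: "\<beta>^(k+1) \<le> \<beta>" for k using beta by (simp add: power_le_one)
  have tb_eq: "tb k = n * (\<theta> * DR) * (2 / (1 - \<beta>)) * \<beta>^(k+1)" for k
    unfolding tb_def by (simp add: field_simps)
  have tb0: "0 \<le> tb k" for k unfolding tb_eq using n0 c0 beta by simp
  have tb1: "tb k \<le> n * (C1 + C2) * \<gamma>^(k+1)" for k
  proof -
    have "tb k \<le> n * (\<theta> * DR) * Kc * \<beta>^(k+1)"
      unfolding tb_eq using n0 c0 Kc beta by (intro mult_right_mono mult_left_mono) auto
    also have "\<dots> \<le> n * (C1 + C2) * \<gamma>^(k+1)"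
    proof (rule mult_mono)
      show "n * (\<theta> * DR) * Kc \<le> n * (C1 + C2)"
      proof -
        have p0: "0 \<le> \<theta> * DR * Kc" using c0 Kc0 by simp
        have "\<theta> * DR * Kc \<le> \<theta> * DR + 2 * (\<theta> * DR) * Kc" using p0 c0 by linarith
        then show ?thesis unfolding C2K C1c using n0 by (simp add: mult.assoc)
      qed
    qed (use bpow n0 c0 Kc0 C2K C1c beta in auto)
    finally show ?thesis .
  qed
  have tb2: "(tb k)^2 \<le> n^2 * \<beta> * (C1^2 + C2^2) * \<gamma>^(k+1)" for k
  proof -
    have q0: "0 \<le> 2 / (1 - \<beta>)" using beta by simp
    have "(tb k)^2 = n^2 * (\<theta> * DR)^2 * (2 / (1 - \<beta>))^2 * (\<beta>^(k+1) * \<beta>^(k+1))"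
      unfolding tb_eq by (simp add: power2_eq_square algebra_simps)
    also have "\<dots> \<le> n^2 * (\<theta> * DR)^2 * Kc^2 * (\<beta> * \<gamma>^(k+1))"
    proof (rule mult_mono)
      show "n^2 * (\<theta> * DR)^2 * (2 / (1 - \<beta>))^2 \<le> n^2 * (\<theta> * DR)^2 * Kc^2"
        using Kc q0 by (intro mult_left_mono power_mono) auto
      show "\<beta>^(k+1) * \<beta>^(k+1) \<le> \<beta> * \<gamma>^(k+1)"
        using bpow1 bpow beta by (intro mult_mono) auto
    qed (use beta in auto)
    also have "\<dots> = n^2 * \<beta> * ((\<theta> * DR)^2 * Kc^2) * \<gamma>^(k+1)" by (simp add: algebra_simps)
    also have "\<dots> \<le> n^2 * \<beta> * (C1^2 + C2^2) * \<gamma>^(k+1)"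
    proof -
      have "(\<theta> * DR)^2 * Kc^2 \<le> C1^2 + C2^2"
      proof -
        have "C2^2 = 4 * ((\<theta> * DR)^2 * Kc^2)" unfolding C2K by (simp add: power_mult_distrib)
        moreover have "0 \<le> (\<theta> * DR)^2 * Kc^2" "0 \<le> C1^2" by simp_all
        ultimately show ?thesis by linarith
      qed
      moreover have "0 \<le> n^2 * \<beta>" "0 \<le> \<gamma>^(k+1)" using beta bg by auto
      ultimately show ?thesis by (intro mult_right_mono mult_left_mono) auto
    qed
    finally show ?thesis .
  qed
  define U where "U k \<omega> = sq_dist (X k \<omega>) xs" for k \<omega>
  define Eb where "Eb k \<omega> = (\<Sum>i\<in>UNIV. norm (e k i \<omega>)^2)" for k \<omega>
  define c0 where "c0 = 1 + \<alpha>^2 - 2*\<alpha>*\<eta>\<phi> + 4*\<alpha>^2*L\<phi>^2"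
  define SL where "SL = (\<Sum>i\<in>UNIV. L i)"
  define SL2 where "SL2 = (\<Sum>i\<in>UNIV. (L i)^2)"
  define Tk where "Tk k = 4*\<alpha>*n*DR*(C1+C2)*SL*\<gamma>^(k+1) + 4*\<alpha>^2*n^2*\<beta>*(C1^2+C2^2)*SL2*\<gamma>^(k+1)" for k
  have SL0: "0 \<le> SL" unfolding SL_def using L0 by (simp add: sum_nonneg)
  have SL20: "0 \<le> SL2" unfolding SL2_def by (simp add: sum_nonneg)
  have U0: "0 \<le> U k \<omega>" for k \<omega> unfolding U_def sq_dist_def by (simp add: sum_nonneg)
  have path: "U (Suc k) \<omega> \<le> c0 * U k \<omega> + (1 + 2*\<alpha>^2) * Eb k \<omega> + Tk k" if om: "\<omega> \<in> space M" for k \<omega>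
  proof -
    define x where "x = X k \<omega>"
    have xR: "x \<in> Rset" unfolding x_def by (rule XRset)
    have per: "norm (X (Suc k) \<omega> i - xs i)^2 \<le> (1+\<alpha>^2)*norm (x i - xs i)^2
        - 2*\<alpha>*inner (\<phi> i x - \<phi> i xs) (x i - xs i) + (1+2*\<alpha>^2)*norm (e k i \<omega>)^2
        + 4*\<alpha>^2*norm (\<phi> i x - \<phi> i xs)^2 + 4*\<alpha>*DR*tb k * L i + 4*\<alpha>^2*(tb k)^2 * (L i)^2" for i
    proof -
      define Fv where "Fv = F i (x i) (n *\<^sub>R Vh k \<omega> i)"
      define z1 where "z1 = x i - \<alpha> *\<^sub>R (Fv + e k i \<omega>)"
      have "Fv + e k i \<omega> = (1 / real (S k)) *\<^sub>R (\<Sum>p\<in>{1..S k}. G i (X k \<omega> i) (n *\<^sub>R Vh k \<omega> i) (\<xi> i k p \<omega>))"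
        unfolding e_eq Fv_def x_def by simp
      then have "\<alpha> *\<^sub>R (Fv + e k i \<omega>) = (\<alpha> / real (S k)) *\<^sub>R (\<Sum>p\<in>{1..S k}. G i (X k \<omega> i) (n *\<^sub>R Vh k \<omega> i) (\<xi> i k p \<omega>))"
        by simp
      then have Xs: "X (Suc k) \<omega> i = prox \<alpha> (r i) z1" unfolding XS z1_def x_def by simp
      have ni: "norm (X (Suc k) \<omega> i - xs i) \<le> norm (z1 - (xs i - \<alpha> *\<^sub>R \<phi> i xs))"
        unfolding Xs by (rule vi_nonexp[OF vi_X vi_xs alpha_pos])
      have zz: "z1 - (xs i - \<alpha> *\<^sub>R \<phi> i xs) = (x i - xs i) - \<alpha> *\<^sub>R ((\<phi> i x - \<phi> i xs) + e k i \<omega> + (Fv - \<phi> i x))"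
        unfolding z1_def by (simp add: algebra_simps)
      have dB: "norm (Fv - \<phi> i x) \<le> L i * tb k"
      proof -
        have "\<phi> i x = F i (x i) (\<Sum>j\<in>UNIV. x j)" using F_phi xR by simp
        then have "norm (Fv - \<phi> i x) \<le> L i * norm (n *\<^sub>R Vh k \<omega> i - (\<Sum>j\<in>UNIV. x j))"
          unfolding Fv_def using Flip XR czb om unfolding x_def by simp
        also have "\<dots> \<le> L i * tb k" unfolding x_def using track L0 by (intro mult_left_mono) auto
        finally show ?thesis .
      qed
      have uB: "norm (x i - xs i) \<le> 2 * DR"
      proof -
        have "norm (x i - xs i) \<le> norm (x i) + norm (xs i)" by (rule norm_triangle_ineq4)
        also have "\<dots> \<le> Bd i + Bd i" unfolding x_def using normB XR xsR by (intro add_mono) auto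
        finally show ?thesis using BdDR[of i] by simp
      qed
      have "norm (X (Suc k) \<omega> i - xs i)^2 \<le> norm (z1 - (xs i - \<alpha> *\<^sub>R \<phi> i xs))^2"
        using ni by (intro power_mono) auto
      also have "\<dots> \<le> (1 + \<alpha>^2) * norm (x i - xs i)^2 - 2*\<alpha>*inner (x i - xs i) (\<phi> i x - \<phi> i xs)
          + (1 + 2*\<alpha>^2) * norm (e k i \<omega>)^2 + 4*\<alpha>^2*norm (\<phi> i x - \<phi> i xs)^2
          + 2*\<alpha>*(norm (x i - xs i)*norm (Fv - \<phi> i x)) + 4*\<alpha>^2*norm (Fv - \<phi> i x)^2"
        unfolding zz by (rule step_ineq) (use alpha_pos in simp)
      also have "2*\<alpha>*(norm (x i - xs i)*norm (Fv - \<phi> i x)) \<le> 2*\<alpha>*((2 * DR) * (L i * tb k))"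
        using uB dB alpha_pos DR0 by (intro mult_left_mono mult_mono) auto
      also have "4*\<alpha>^2*norm (Fv - \<phi> i x)^2 \<le> 4*\<alpha>^2*(L i * tb k)^2"
        using dB by (intro mult_left_mono power_mono) auto
      finally show ?thesis by (simp add: inner_commute power_mult_distrib algebra_simps)
    qed
    have "U (Suc k) \<omega> \<le> (\<Sum>i\<in>UNIV. (1+\<alpha>^2)*norm (x i - xs i)^2
        - 2*\<alpha>*inner (\<phi> i x - \<phi> i xs) (x i - xs i) + (1+2*\<alpha>^2)*norm (e k i \<omega>)^2
        + 4*\<alpha>^2*norm (\<phi> i x - \<phi> i xs)^2 + 4*\<alpha>*DR*tb k * L i + 4*\<alpha>^2*(tb k)^2 * (L i)^2)"
      unfolding U_def sq_dist_def by (rule sum_mono) (rule per)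
    also have "\<dots> = (1+\<alpha>^2) * U k \<omega> - 2*\<alpha>*(\<Sum>i\<in>UNIV. inner (\<phi> i x - \<phi> i xs) (x i - xs i))
        + (1+2*\<alpha>^2) * Eb k \<omega> + 4*\<alpha>^2 * sq_dist (\<lambda>i. \<phi> i x) (\<lambda>i. \<phi> i xs)
        + 4*\<alpha>*DR*tb k * SL + 4*\<alpha>^2*(tb k)^2 * SL2"
      unfolding U_def Eb_def sq_dist_def SL_def SL2_def x_def
      by (simp add: sum.distrib sum_subtractf sum_distrib_left)
    also have "\<dots> \<le> (1+\<alpha>^2) * U k \<omega> - 2*\<alpha>*(\<eta>\<phi> * U k \<omega>)
        + (1+2*\<alpha>^2) * Eb k \<omega> + 4*\<alpha>^2 * (L\<phi>^2 * U k \<omega>)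
        + 4*\<alpha>*DR*(n * (C1 + C2) * \<gamma>^(k+1)) * SL + 4*\<alpha>^2*(n^2 * \<beta> * (C1^2 + C2^2) * \<gamma>^(k+1)) * SL2"
    proof -
      have m: "\<eta>\<phi> * U k \<omega> \<le> (\<Sum>i\<in>UNIV. inner (\<phi> i x - \<phi> i xs) (x i - xs i))"
        using phi_strmono xR xs_R unfolding U_def x_def by blast
      have l: "sq_dist (\<lambda>i. \<phi> i x) (\<lambda>i. \<phi> i xs) \<le> L\<phi>^2 * U k \<omega>"
      proof -
        have sl: "sqrt (sq_dist (\<lambda>i. \<phi> i x) (\<lambda>i. \<phi> i xs)) \<le> L\<phi> * sqrt (U k \<omega>)"
          using phi_lip xR xs_R unfolding U_def x_def by blast
        have p0: "0 \<le> sq_dist (\<lambda>i. \<phi> i x) (\<lambda>i. \<phi> i xs)" unfolding sq_dist_def by (simp add: sum_nonneg)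
        have "sq_dist (\<lambda>i. \<phi> i x) (\<lambda>i. \<phi> i xs) = (sqrt (sq_dist (\<lambda>i. \<phi> i x) (\<lambda>i. \<phi> i xs)))^2"
          using p0 by simp
        also have "\<dots> \<le> (L\<phi> * sqrt (U k \<omega>))^2" using sl p0 by (intro power_mono) auto
        also have "\<dots> = L\<phi>^2 * U k \<omega>" using U0 by (simp add: power_mult_distrib)
        finally show ?thesis .
      qed
      have t1: "4*\<alpha>*DR*tb k * SL \<le> 4*\<alpha>*DR*(n * (C1 + C2) * \<gamma>^(k+1)) * SL"
        using tb1 alpha_pos DR0 SL0 by (intro mult_right_mono mult_left_mono) auto
      have t2: "4*\<alpha>^2*(tb k)^2 * SL2 \<le> 4*\<alpha>^2*(n^2 * \<beta> * (C1^2 + C2^2) * \<gamma>^(k+1)) * SL2"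
        using tb2 SL20 by (intro mult_right_mono mult_left_mono) auto
      have m2: "2*\<alpha>*(\<eta>\<phi> * U k \<omega>) \<le> 2*\<alpha>*(\<Sum>i\<in>UNIV. inner (\<phi> i x - \<phi> i xs) (x i - xs i))"
        using m alpha_pos by (intro mult_left_mono) auto
      have l2: "4*\<alpha>^2 * sq_dist (\<lambda>i. \<phi> i x) (\<lambda>i. \<phi> i xs) \<le> 4*\<alpha>^2 * (L\<phi>^2 * U k \<omega>)"
        using l by (intro mult_left_mono) auto
      show ?thesis using t1 t2 m2 l2 by linarith
    qed
    also have "\<dots> = c0 * U k \<omega> + (1 + 2*\<alpha>^2) * Eb k \<omega> + Tk k"
      unfolding c0_def Tk_def by (simp add: algebra_simps)
    finally show ?thesis .
  qed
  have proxc: "continuous_on UNIV (prox \<alpha> (r i))" for i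
    unfolding continuous_on_iff
  proof (intro ballI allI impI)
    fix x :: 'a and ee :: real assume "0 < ee"
    then show "\<exists>d>0. \<forall>x'\<in>UNIV. dist x' x < d \<longrightarrow> dist (prox \<alpha> (r i) x') (prox \<alpha> (r i) x) < ee"
      using vi_nonexp[OF vi_X vi_X alpha_pos] by (intro exI[of _ ee]) (auto simp: dist_norm intro: le_less_trans)
  qed
  have proxm: "prox \<alpha> (r i) \<in> borel_measurable borel" for i
    by (rule borel_measurable_continuous_onI[OF proxc])
  have measVh_of: "(\<lambda>\<omega>. Vh k \<omega> i) \<in> borel_measurable M"
    if "\<And>j. (\<lambda>\<omega>. V k \<omega> j) \<in> borel_measurable M" for k i
    unfolding VhV mix_pow using that by (intro borel_measurable_sum borel_measurable_scaleR) auto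
  have measG: "(\<lambda>\<omega>. G i (X k \<omega> i) (n *\<^sub>R Vh k \<omega> i) (\<xi> i k p \<omega>)) \<in> borel_measurable M"
    if "(\<lambda>\<omega>. X k \<omega> i) \<in> borel_measurable M" "(\<lambda>\<omega>. Vh k \<omega> i) \<in> borel_measurable M" for k i p
  proof -
    have "(\<lambda>\<omega>. (X k \<omega> i, n *\<^sub>R Vh k \<omega> i, \<xi> i k p \<omega>)) \<in> measurable M (borel \<Otimes>\<^sub>M (borel \<Otimes>\<^sub>M P i))"
      using that xi_meas by (intro measurable_Pair borel_measurable_scaleR) auto
    from measurable_compose[OF this G_meas[rule_format, of i]] show ?thesis by simp
  qed
  have measXV: "(\<lambda>\<omega>. X k \<omega> i) \<in> borel_measurable M \<and> (\<lambda>\<omega>. V k \<omega> i) \<in> borel_measurable M" for k i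
  proof (induction k arbitrary: i)
    case 0 show ?case using X0 V0 by simp
  next
    case (Suc k)
    have vh: "(\<lambda>\<omega>. Vh k \<omega> j) \<in> borel_measurable M" for j using Suc by (intro measVh_of) blast
    have xsu: "(\<lambda>\<omega>. X (Suc k) \<omega> j) \<in> borel_measurable M" for j
    proof -
      have "(\<lambda>\<omega>. X k \<omega> j - (\<alpha> / real (S k)) *\<^sub>R (\<Sum>p\<in>{1..S k}. G j (X k \<omega> j) (n *\<^sub>R Vh k \<omega> j) (\<xi> j k p \<omega>)))
            \<in> borel_measurable M"
        using Suc vh measG by (intro borel_measurable_diff borel_measurable_scaleR borel_measurable_sum) auto
      from measurable_compose[OF this proxm] show ?thesis unfolding XS by simp
    qed
    have "(\<lambda>\<omega>. V (Suc k) \<omega> i) = (\<lambda>\<omega>. Vh k \<omega> i + X (Suc k) \<omega> i - X k \<omega> i)" using VS by auto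
    then show ?case using xsu vh Suc by (auto intro!: borel_measurable_add borel_measurable_diff)
  qed
  have measX: "(\<lambda>\<omega>. X k \<omega> i) \<in> borel_measurable M" for k i using measXV by blast
  have measVh: "(\<lambda>\<omega>. Vh k \<omega> i) \<in> borel_measurable M" for k i using measXV by (intro measVh_of) blast
  have sfP: "sigma_finite_measure (P i)" for i using P_prob prob_space_imp_sigma_finite by blast
  have measF: "(\<lambda>\<omega>. F i (X k \<omega> i) (n *\<^sub>R Vh k \<omega> i)) \<in> borel_measurable M" for k i
  proof -
    have eq: "F i (X k \<omega> i) (n *\<^sub>R Vh k \<omega> i) = (\<integral>s. G i (X k \<omega> i) (n *\<^sub>R Vh k \<omega> i) s \<partial>P i)" for \<omega>
      using G_unbiased XR by simp
    have "(\<lambda>x. (X k (fst x) i, n *\<^sub>R Vh k (fst x) i, snd x)) \<in> measurable (M \<Otimes>\<^sub>M P i) (borel \<Otimes>\<^sub>M (borel \<Otimes>\<^sub>M P i))"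
      using measX measVh
      by (intro measurable_Pair borel_measurable_scaleR measurable_compose[OF measurable_fst]) auto
    from measurable_compose[OF this G_meas[rule_format, of i]]
    have "(\<lambda>x. G i (X k (fst x) i) (n *\<^sub>R Vh k (fst x) i) (snd x)) \<in> borel_measurable (M \<Otimes>\<^sub>M P i)"
      by simp
    moreover have "(\<lambda>x. G i (X k (fst x) i) (n *\<^sub>R Vh k (fst x) i) (snd x))
        = case_prod (\<lambda>\<omega> s. G i (X k \<omega> i) (n *\<^sub>R Vh k \<omega> i) s)" by (auto simp: fun_eq_iff)
    ultimately have "(\<lambda>\<omega>. \<integral>s. G i (X k \<omega> i) (n *\<^sub>R Vh k \<omega> i) s \<partial>P i) \<in> borel_measurable M"
      using sigma_finite_measure.borel_measurable_lebesgue_integral[OF sfP, of "\<lambda>\<omega> s. G i (X k \<omega> i) (n *\<^sub>R Vh k \<omega> i) s" M]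
      by simp
    then show ?thesis using eq by simp
  qed
  have measE: "(\<lambda>\<omega>. e k i \<omega>) \<in> borel_measurable M" for k i
    unfolding e_eq using measG measX measVh measF
    by (intro borel_measurable_diff borel_measurable_scaleR borel_measurable_sum) auto
  have subalg: "subalgebra M (nat_filt M X k)" for k
  proof -
    define Gs where "Gs = (\<Union>j\<in>{..k}. \<Union>i. {(\<lambda>\<omega>. X j \<omega> i) -` B \<inter> space M | B. B \<in> sets borel})"
    have Gs_sub: "Gs \<subseteq> sets M" unfolding Gs_def using measX by (auto intro!: measurable_sets)
    have Gs_pow: "Gs \<subseteq> Pow (space M)" unfolding Gs_def by auto
    have sp: "space (nat_filt M X k) = space M"
      unfolding nat_filt_def Gs_def[symmetric] by (simp add: space_measure_of_conv)
    have st: "sets (nat_filt M X k) = sigma_sets (space M) Gs"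
      unfolding nat_filt_def Gs_def[symmetric] using Gs_pow by (simp add: sets_measure_of_conv)
    have "sigma_sets (space M) Gs \<subseteq> sets M" by (rule sets.sigma_sets_subset[OF Gs_sub])
    then show ?thesis unfolding subalgebra_def sp st by simp
  qed
  have finM: "finite_measure M" using M_prob unfolding prob_space_def by blast
  define Bv where "Bv k i \<omega> = ((\<nu>1 i)^2 * (norm (X k \<omega> i))^2 + (\<nu>2 i)^2) / real (S k)" for k i \<omega>
  have intBv: "integrable M (Bv k i)" for k i
  proof (rule M.integrable_const_bound[where B = "((\<nu>1 i)^2 * (Bd i)^2 + (\<nu>2 i)^2) / real (S k)"])
    show "AE \<omega> in M. norm (Bv k i \<omega>) \<le> ((\<nu>1 i)^2 * (Bd i)^2 + (\<nu>2 i)^2) / real (S k)"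
    proof (rule AE_I2)
      fix \<omega>
      have "(norm (X k \<omega> i))^2 \<le> (Bd i)^2" using normB[OF XR] by (intro power_mono) auto
      then have "(\<nu>1 i)^2 * (norm (X k \<omega> i))^2 + (\<nu>2 i)^2 \<le> (\<nu>1 i)^2 * (Bd i)^2 + (\<nu>2 i)^2"
        by (intro add_right_mono mult_left_mono) auto
      then show "norm (Bv k i \<omega>) \<le> ((\<nu>1 i)^2 * (Bd i)^2 + (\<nu>2 i)^2) / real (S k)"
        unfolding Bv_def by (simp add: divide_right_mono)
    qed
    show "Bv k i \<in> borel_measurable M" unfolding Bv_def using measX by measurable
  qed
  have Bv0: "0 \<le> Bv k i \<omega>" for k i \<omega> unfolding Bv_def by simp
  have Ee: "integrable M (\<lambda>\<omega>. norm (e k i \<omega>)^2) \<and> (\<integral>\<omega>. norm (e k i \<omega>)^2 \<partial>M) \<le> (\<integral>\<omega>. Bv k i \<omega> \<partial>M)" for k i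
  proof -
    interpret FS: finite_measure_subalgebra M "nat_filt M X k"
      unfolding finite_measure_subalgebra_def finite_measure_subalgebra_axioms_def
      using finM subalg by blast
    have bm: "(\<lambda>\<omega>. ennreal (norm (e k i \<omega>)^2)) \<in> borel_measurable M" using measE by measurable
    have bm2: "(\<lambda>\<omega>. norm (e k i \<omega>)^2) \<in> borel_measurable M" using measE by measurable
    have "(\<integral>\<^sup>+\<omega>. ennreal (norm (e k i \<omega>)^2) \<partial>M)
        = (\<integral>\<^sup>+\<omega>. nn_cond_exp M (nat_filt M X k) (\<lambda>\<omega>. ennreal (norm (e k i \<omega>)^2)) \<omega> \<partial>M)"
      using FS.nn_cond_exp_intg[of "\<lambda>_. 1" "\<lambda>\<omega>. ennreal (norm (e k i \<omega>)^2)"] bm by simp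
    also have "\<dots> \<le> (\<integral>\<^sup>+\<omega>. ennreal (Bv k i \<omega>) \<partial>M)"
    proof (rule nn_integral_mono_AE)
      show "AE \<omega> in M. nn_cond_exp M (nat_filt M X k) (\<lambda>\<omega>. ennreal ((norm (e k i \<omega>))\<^sup>2)) \<omega> \<le> ennreal (Bv k i \<omega>)"
        using err_var unfolding Bv_def by blast
    qed
    also have "\<dots> = ennreal (\<integral>\<omega>. Bv k i \<omega> \<partial>M)"
      by (rule nn_integral_eq_integral[OF intBv]) (simp add: Bv0)
    finally have le: "(\<integral>\<^sup>+\<omega>. ennreal (norm (e k i \<omega>)^2) \<partial>M) \<le> ennreal (\<integral>\<omega>. Bv k i \<omega> \<partial>M)" .
    have int: "integrable M (\<lambda>\<omega>. norm (e k i \<omega>)^2)"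
    proof (rule integrableI_nonneg[OF bm2])
      show "AE x in M. 0 \<le> (norm (e k i x))\<^sup>2" by simp
      show "(\<integral>\<^sup>+\<omega>. ennreal (norm (e k i \<omega>)^2) \<partial>M) < \<infinity>" using le by (simp add: le_less_trans)
    qed
    have "ennreal (\<integral>\<omega>. norm (e k i \<omega>)^2 \<partial>M) = (\<integral>\<^sup>+\<omega>. ennreal (norm (e k i \<omega>)^2) \<partial>M)"
      by (rule nn_integral_eq_integral[OF int, symmetric]) simp
    with le have "ennreal (\<integral>\<omega>. norm (e k i \<omega>)^2 \<partial>M) \<le> ennreal (\<integral>\<omega>. Bv k i \<omega> \<partial>M)" by simp
    moreover have "0 \<le> (\<integral>\<omega>. Bv k i \<omega> \<partial>M)" using Bv0 by (simp add: integral_nonneg)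
    ultimately have "(\<integral>\<omega>. norm (e k i \<omega>)^2 \<partial>M) \<le> (\<integral>\<omega>. Bv k i \<omega> \<partial>M)" by (simp add: ennreal_le_iff)
    then show ?thesis using int by simp
  qed
  have intU: "integrable M (U k)" for k
  proof (rule M.integrable_const_bound[where B = "real CARD('n) * (2*DR)^2"])
    show "AE \<omega> in M. norm (U k \<omega>) \<le> real CARD('n) * (2*DR)^2"
    proof (rule AE_I2)
      fix \<omega>
      have each: "norm (X k \<omega> i - xs i)^2 \<le> (2*DR)^2" for i
      proof -
        have "norm (X k \<omega> i - xs i) \<le> norm (X k \<omega> i) + norm (xs i)" by (rule norm_triangle_ineq4)
        also have "\<dots> \<le> 2*DR" using normB[OF XR] normB[OF xsR] BdDR[of i] by (smt (verit))
        finally show "norm (X k \<omega> i - xs i)^2 \<le> (2*DR)^2" by (intro power_mono) auto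
      qed
      have "U k \<omega> \<le> (\<Sum>i\<in>(UNIV::'n set). (2*DR)^2)" unfolding U_def sq_dist_def
        using each by (intro sum_mono) auto
      then show "norm (U k \<omega>) \<le> real CARD('n) * (2*DR)^2" using U0 by simp
    qed
    show "U k \<in> borel_measurable M" unfolding U_def sq_dist_def using measX by measurable
  qed
  have intE: "integrable M (\<lambda>\<omega>. norm (e k i \<omega>)^2)" for k i using Ee by blast
  have intEb: "integrable M (Eb k)" for k
    unfolding Eb_def by (rule Bochner_Integration.integrable_sum) (rule intE)
  have Sb: "1 / real (S k) \<le> \<alpha>^2 * \<rho>^(k+1)" for k
  proof -
    define y where "y = (1 / \<alpha>\<^sup>2) * (1 / \<rho>) ^ (k + 1)"
    have y: "y = 1 / (\<alpha>^2 * \<rho>^(k+1))" unfolding y_def by (simp add: power_one_over)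
    have y0: "0 < y" unfolding y using alpha_pos rho by simp
    have "y \<le> real (S k)" using S_def real_nat_ceiling_ge unfolding y_def by metis
    then have "1 / real (S k) \<le> 1 / y" using y0 by (intro divide_left_mono) auto
    then show ?thesis unfolding y by simp
  qed
  have nu1le: "(\<nu>1 i)^2 \<le> \<nu>1b^2" for i
  proof -
    have "\<nu>1 i \<le> \<nu>1b" unfolding nu1b by simp
    then show ?thesis using nu_pos by (intro power_mono) (auto simp: less_imp_le)
  qed
  define \<kappa> where "\<kappa> = 2*\<alpha>^2*(1+2*\<alpha>^2)*\<nu>1b^2"
  have Bsum: "(1 + 2*\<alpha>^2) * (\<Sum>i\<in>UNIV. Bv k i \<omega>) \<le> \<kappa> * U k \<omega> + \<alpha>^2 * \<nu>b_sq * \<gamma>^(k+1)" for k \<omega>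
  proof -
    have sx: "(\<Sum>i\<in>UNIV. (norm (X k \<omega> i))^2) \<le> 2 * U k \<omega> + 2 * sq_norm xs"
    proof -
      have "(\<Sum>i\<in>UNIV. (norm (X k \<omega> i))^2) \<le> (\<Sum>i\<in>UNIV. 2 * norm (X k \<omega> i - xs i)^2 + 2 * norm (xs i)^2)"
      proof (rule sum_mono)
        fix i
        have "X k \<omega> i = (X k \<omega> i - xs i) + xs i" by simp
        then show "(norm (X k \<omega> i))^2 \<le> 2 * norm (X k \<omega> i - xs i)^2 + 2 * norm (xs i)^2"
          using norm_sq_add_le[of "X k \<omega> i - xs i" "xs i"] by simp
      qed
      also have "\<dots> = 2 * U k \<omega> + 2 * sq_norm xs"
        unfolding U_def sq_dist_def sq_norm_def by (simp add: sum.distrib sum_distrib_left)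
      finally show ?thesis .
    qed
    have "(\<Sum>i\<in>UNIV. Bv k i \<omega>) = (\<Sum>i\<in>UNIV. (\<nu>1 i)^2 * (norm (X k \<omega> i))^2 + (\<nu>2 i)^2) * (1 / real (S k))"
      unfolding Bv_def by (simp add: sum_divide_distrib)
    also have "\<dots> \<le> (\<nu>1b^2 * (2 * U k \<omega> + 2 * sq_norm xs) + \<nu>2b_sq) * (\<alpha>^2 * \<rho>^(k+1))"
    proof (rule mult_mono)
      have "(\<Sum>i\<in>UNIV. (\<nu>1 i)^2 * (norm (X k \<omega> i))^2 + (\<nu>2 i)^2)
          = (\<Sum>i\<in>UNIV. (\<nu>1 i)^2 * (norm (X k \<omega> i))^2) + \<nu>2b_sq"
        unfolding nu2b by (simp add: sum.distrib)
      also have "(\<Sum>i\<in>UNIV. (\<nu>1 i)^2 * (norm (X k \<omega> i))^2) \<le> (\<Sum>i\<in>UNIV. \<nu>1b^2 * (norm (X k \<omega> i))^2)"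
        using nu1le by (intro sum_mono mult_right_mono) auto
      also have "\<dots> = \<nu>1b^2 * (\<Sum>i\<in>UNIV. (norm (X k \<omega> i))^2)" by (simp add: sum_distrib_left)
      also have "\<dots> \<le> \<nu>1b^2 * (2 * U k \<omega> + 2 * sq_norm xs)" using sx by (intro mult_left_mono) auto
      finally show "(\<Sum>i\<in>UNIV. (\<nu>1 i)^2 * (norm (X k \<omega> i))^2 + (\<nu>2 i)^2)
          \<le> \<nu>1b^2 * (2 * U k \<omega> + 2 * sq_norm xs) + \<nu>2b_sq" by simp
      show "1 / real (S k) \<le> \<alpha>^2 * \<rho>^(k+1)" by (rule Sb)
      show "0 \<le> 1 / real (S k)" by simp
      have "0 \<le> sq_norm xs" unfolding sq_norm_def by (simp add: sum_nonneg)
      moreover have "0 \<le> \<nu>2b_sq" unfolding nu2b by (simp add: sum_nonneg)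
      ultimately show "0 \<le> \<nu>1b^2 * (2 * U k \<omega> + 2 * sq_norm xs) + \<nu>2b_sq" using U0 by simp
    qed
    finally have h1: "(\<Sum>i\<in>UNIV. Bv k i \<omega>) \<le> (\<nu>1b^2 * (2 * U k \<omega> + 2 * sq_norm xs) + \<nu>2b_sq) * (\<alpha>^2 * \<rho>^(k+1))" .
    have "(1 + 2*\<alpha>^2) * (\<Sum>i\<in>UNIV. Bv k i \<omega>)
        \<le> (1 + 2*\<alpha>^2) * ((\<nu>1b^2 * (2 * U k \<omega> + 2 * sq_norm xs) + \<nu>2b_sq) * (\<alpha>^2 * \<rho>^(k+1)))"
      using h1 by (intro mult_left_mono) auto
    also have "\<dots> = \<kappa> * U k \<omega> * \<rho>^(k+1) + \<alpha>^2 * \<nu>b_sq * \<rho>^(k+1)"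
      unfolding \<kappa>_def nub_def by (simp add: algebra_simps)
    also have "\<dots> \<le> \<kappa> * U k \<omega> * 1 + \<alpha>^2 * \<nu>b_sq * \<gamma>^(k+1)"
    proof (rule add_mono)
      have k0: "0 \<le> \<kappa> * U k \<omega>" unfolding \<kappa>_def using U0 by simp
      show "\<kappa> * U k \<omega> * \<rho>^(k+1) \<le> \<kappa> * U k \<omega> * 1"
      proof (rule mult_left_mono[OF _ k0])
        show "\<rho>^(k+1) \<le> 1" using rho by (intro power_le_one) auto
      qed
      have "0 \<le> sq_norm xs" unfolding sq_norm_def by (simp add: sum_nonneg)
      moreover have "0 \<le> \<nu>2b_sq" unfolding nu2b by (simp add: sum_nonneg)
      ultimately have "0 \<le> \<alpha>^2 * \<nu>b_sq" unfolding nub_def by simp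
      then show "\<alpha>^2 * \<nu>b_sq * \<rho>^(k+1) \<le> \<alpha>^2 * \<nu>b_sq * \<gamma>^(k+1)"
        using rho rg by (intro mult_left_mono power_mono) auto
    qed
    finally show ?thesis by simp
  qed
  have rho_eq: "rho_phi = c0 + \<kappa>"
  proof -
    have "Lt^2 = 1/2 + (1 + 2 * \<alpha>\<^sup>2) * \<nu>1b\<^sup>2 + 2 * L\<phi>\<^sup>2"
      unfolding Lt_def by (simp add: add_nonneg_nonneg)
    then show ?thesis unfolding rho_def c0_def \<kappa>_def by (simp add: algebra_simps)
  qed
  have C3_eq: "C3 * \<gamma>^(k+1) = \<alpha>^2 * \<nu>b_sq * \<gamma>^(k+1) + Tk k" for k
    unfolding C3_def Tk_def SL_def SL2_def by (simp add: algebra_simps)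
  show ?thesis
  proof
    fix k
    have intB: "integrable M (\<lambda>\<omega>. (1 + 2*\<alpha>^2) * (\<Sum>i\<in>UNIV. Bv k i \<omega>))"
      using intBv by (intro integrable_mult_right Bochner_Integration.integrable_sum) auto
    have "(\<integral>\<omega>. U (Suc k) \<omega> \<partial>M) \<le> (\<integral>\<omega>. c0 * U k \<omega> + (1 + 2*\<alpha>^2) * Eb k \<omega> + Tk k \<partial>M)"
      by (rule integral_mono) (use intU intEb path in auto)
    also have "\<dots> = c0 * (\<integral>\<omega>. U k \<omega> \<partial>M) + (1 + 2*\<alpha>^2) * (\<Sum>i\<in>UNIV. \<integral>\<omega>. norm (e k i \<omega>)^2 \<partial>M) + Tk k"
    proof -
      have "(\<integral>\<omega>. c0 * U k \<omega> + (1 + 2*\<alpha>^2) * Eb k \<omega> + Tk k \<partial>M)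
          = (\<integral>\<omega>. c0 * U k \<omega> + (1 + 2*\<alpha>^2) * Eb k \<omega> \<partial>M) + (\<integral>\<omega>. Tk k \<partial>M)"
        using intU intEb by (intro Bochner_Integration.integral_add) auto
      also have "(\<integral>\<omega>. c0 * U k \<omega> + (1 + 2*\<alpha>^2) * Eb k \<omega> \<partial>M)
          = (\<integral>\<omega>. c0 * U k \<omega> \<partial>M) + (\<integral>\<omega>. (1 + 2*\<alpha>^2) * Eb k \<omega> \<partial>M)"
        using intU intEb by (intro Bochner_Integration.integral_add) auto
      also have "(\<integral>\<omega>. Eb k \<omega> \<partial>M) = (\<Sum>i\<in>UNIV. \<integral>\<omega>. norm (e k i \<omega>)^2 \<partial>M)"
        unfolding Eb_def by (rule Bochner_Integration.integral_sum) (rule intE)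
      ultimately show ?thesis by (simp add: M.prob_space)
    qed
    also have "\<dots> \<le> c0 * (\<integral>\<omega>. U k \<omega> \<partial>M) + (1 + 2*\<alpha>^2) * (\<Sum>i\<in>UNIV. \<integral>\<omega>. Bv k i \<omega> \<partial>M) + Tk k"
      using Ee by (intro add_mono mult_left_mono sum_mono order_refl) auto
    also have "(1 + 2*\<alpha>^2) * (\<Sum>i\<in>UNIV. \<integral>\<omega>. Bv k i \<omega> \<partial>M) = (\<integral>\<omega>. (1 + 2*\<alpha>^2) * (\<Sum>i\<in>UNIV. Bv k i \<omega>) \<partial>M)"
      using intBv by (simp add: Bochner_Integration.integral_sum)
    also have "\<dots> \<le> (\<integral>\<omega>. \<kappa> * U k \<omega> + \<alpha>^2 * \<nu>b_sq * \<gamma>^(k+1) \<partial>M)"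
      by (rule integral_mono[OF intB]) (use intU Bsum in auto)
    also have "\<dots> = \<kappa> * (\<integral>\<omega>. U k \<omega> \<partial>M) + \<alpha>^2 * \<nu>b_sq * \<gamma>^(k+1)"
      using intU by (simp add: M.prob_space)
    finally have "(\<integral>\<omega>. U (Suc k) \<omega> \<partial>M) \<le> (c0 + \<kappa>) * (\<integral>\<omega>. U k \<omega> \<partial>M) + (\<alpha>^2 * \<nu>b_sq * \<gamma>^(k+1) + Tk k)"
      by (simp add: algebra_simps)
    then show "(\<integral>\<omega>. sq_dist (X (Suc k) \<omega>) xs \<partial>M) \<le> rho_phi * (\<integral>\<omega>. sq_dist (X k \<omega>) xs \<partial>M) + C3 * \<gamma> ^ (k + 1)"
      unfolding rho_eq C3_eq U_def .
  qed
qed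

end
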